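(* Let $M$ be a unicyclic partial multiplication matrix. There is a bound $B$, depending only on $M$, such that for every $M$-coil $\pi$ and every $M$-gridding $\pi^\#$ of $\pi$, the gridded permutation $\pi^\#$ has at most $B$ misplaced points.
   Context: A gridding matrix has entries in $\{0,1,-1\}$; an $m\times n$ one has $m$ columns, $n$ rows, $M_{ij}$ in column $i$ from the left and row $j$ from the bottom. An $M$-gridding of a permutation $\pi$ of length $L$ is a choice of vertical lines $\tfrac12=v_0\le\dots\le v_m=L+\tfrac12$ and horizontal lines $\tfrac12=h_0\le\dots\le h_n=L+\tfrac12$, not through points of $\pi$, such that in each cell $C_{ij}=\{v_{i-1}<x<v_i,\ h_{j-1}<y<h_j\}$ the points of $\pi$ are absent if $M_{ij}=0$, increasing if $M_{ij}=1$, decreasing if $M_{ij}=-1$; the result is an $M$-gridded permutation. The row-column graph $G_M$ is the bipartite graph on $\{1,\dots,m\}\cup\{1',\dots,n'\}$ with edge $ij'$ iff $M_{ij}\neq0$ (cell $(i,j)$ corresponds to edge $ij'$); $M$ is unicyclic if $G_M$ has exactly one cycle. In an $M$-gridding, a point is misplaced if it lies in a cell that does not correspond to an edge of the cycle of $G_M$. $M$ is a partial multiplication matrix: there are fixed $c_1,\dots,c_m,r_1,\dots,r_n\in\{\pm1\}$ with $M_{ij}=c_ir_j$ for each non-zero entry. Column $i$ is oriented left-to-right if $c_i=1$, right-to-left otherwise; row $j$ bottom-to-top if $r_j=1$, top-to-bottom otherwise. The orientation digraph of an $M$-gridded permutation has its points as vertices with $x\to y$ whenever $x,y$ lie in a common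 column of cells and $x$ precedes $y$ in that column's orientation, or in a common row of cells and $x$ precedes $y$ in that row's orientation. Let $\ell$ be the length of the cycle of $G_M$. A gridded $M$-coil is an $M$-gridded permutation of length $n>\ell$ with an ordering $v_1,\dots,v_n$ of its points and a labelling by $1,\dots,\ell$ of the cells corresponding to the edges of the cycle such that (C1) $v_i$ lies in cell $i\bmod\ell$ (residues in $\{1,\dots,\ell\}$); (C2) $v_{i-1}\to v_i$ for $1<i\le n$; (C3) $v_i\to v_{i-\ell-1}$ for $\ell+1<i\le n$; (C4) $v_{\ell+1}\to v_1$. An $M$-coil is a permutation having some $M$-gridding which is a gridded $M$-coil. *)

theory Defs
  imports Main
begin

(* A gridding matrix with m columns and n rows is a function M :: nat => nat => int,
   M i j the entry in column i (1..m, from the left) and row j (1..n, from the bottom).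
   A permutation of length L is pi :: nat => nat, a bijection of {1..L}; its points are
   identified with their positions p in {1..L} (the point (p, pi p)).
   Grid lines: the vertical line v_i = vv i + 1/2 with vv i :: nat, similarly for rows,
   so the line through no point is encoded by the integer just below it. *)

definition gridding_matrix :: "nat \<Rightarrow> nat \<Rightarrow> (nat \<Rightarrow> nat \<Rightarrow> int) \<Rightarrow> bool" where
  "gridding_matrix m n M \<longleftrightarrow> (\<forall>i\<in>{1..m}. \<forall>j\<in>{1..n}. M i j \<in> {-1, 0, 1})"

definition is_perm :: "nat \<Rightarrow> (nat \<Rightarrow> nat) \<Rightarrow> bool" where
  "is_perm L pi \<longleftrightarrow> bij_betw pi {1..L} {1..L}"

definition in_col :: "(nat \<Rightarrow> nat) \<Rightarrow> nat \<Rightarrow> nat \<Rightarrow> bool" where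
  "in_col vv i p \<longleftrightarrow> vv (i - 1) < p \<and> p \<le> vv i"

definition in_row :: "(nat \<Rightarrow> nat) \<Rightarrow> (nat \<Rightarrow> nat) \<Rightarrow> nat \<Rightarrow> nat \<Rightarrow> bool" where
  "in_row pi hh j p \<longleftrightarrow> hh (j - 1) < pi p \<and> pi p \<le> hh j"

definition in_cell :: "(nat \<Rightarrow> nat) \<Rightarrow> (nat \<Rightarrow> nat) \<Rightarrow> (nat \<Rightarrow> nat) \<Rightarrow> nat \<times> nat \<Rightarrow> nat \<Rightarrow> bool" where
  "in_cell pi vv hh ij p \<longleftrightarrow> in_col vv (fst ij) p \<and> in_row pi hh (snd ij) p"

definition is_gridding ::
  "nat \<Rightarrow> nat \<Rightarrow> (nat \<Rightarrow> nat \<Rightarrow> int) \<Rightarrow> nat \<Rightarrow> (nat \<Rightarrow> nat) \<Rightarrow> (nat \<Rightarrow> nat) \<Rightarrow> (nat \<Rightarrow> nat) \<Rightarrow> bool" where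
  "is_gridding m n M L pi vv hh \<longleftrightarrow>
     vv 0 = 0 \<and> vv m = L \<and> (\<forall>i<m. vv i \<le> vv (Suc i)) \<and>
     hh 0 = 0 \<and> hh n = L \<and> (\<forall>j<n. hh j \<le> hh (Suc j)) \<and>
     (\<forall>i\<in>{1..m}. \<forall>j\<in>{1..n}.
        (M i j = 0 \<longrightarrow> (\<forall>p\<in>{1..L}. \<not> in_cell pi vv hh (i, j) p)) \<and>
        (M i j = 1 \<longrightarrow> (\<forall>p\<in>{1..L}. \<forall>q\<in>{1..L}.
             in_cell pi vv hh (i, j) p \<and> in_cell pi vv hh (i, j) q \<and> p < q \<longrightarrow> pi p < pi q)) \<and>
        (M i j = -1 \<longrightarrow> (\<forall>p\<in>{1..L}. \<forall>q\<in>{1..L}.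
             in_cell pi vv hh (i, j) p \<and> in_cell pi vv hh (i, j) q \<and> p < q \<longrightarrow> pi p > pi q)))"

(* Cycles of the row-column graph G_M, given as their edge sets (edge ij' = cell (i,j)). *)
definition is_cycle :: "nat \<Rightarrow> nat \<Rightarrow> (nat \<Rightarrow> nat \<Rightarrow> int) \<Rightarrow> (nat \<times> nat) set \<Rightarrow> bool" where
  "is_cycle m n M C \<longleftrightarrow>
     (\<exists>k ic jc. k \<ge> 2 \<and> inj_on ic {0..<k} \<and> inj_on jc {0..<k} \<and>
        ic ` {0..<k} \<subseteq> {1..m} \<and> jc ` {0..<k} \<subseteq> {1..n} \<and>
        (\<forall>t<k. M (ic t) (jc t) \<noteq> 0 \<and> M (ic (Suc t mod k)) (jc t) \<noteq> 0) \<and>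
        C = (\<lambda>t. (ic t, jc t)) ` {0..<k} \<union> (\<lambda>t. (ic (Suc t mod k), jc t)) ` {0..<k})"

definition unicyclic :: "nat \<Rightarrow> nat \<Rightarrow> (nat \<Rightarrow> nat \<Rightarrow> int) \<Rightarrow> bool" where
  "unicyclic m n M \<longleftrightarrow> (\<exists>!C. is_cycle m n M C)"

definition the_cycle :: "nat \<Rightarrow> nat \<Rightarrow> (nat \<Rightarrow> nat \<Rightarrow> int) \<Rightarrow> (nat \<times> nat) set" where
  "the_cycle m n M = (THE C. is_cycle m n M C)"

definition pmm_signs ::
  "nat \<Rightarrow> nat \<Rightarrow> (nat \<Rightarrow> nat \<Rightarrow> int) \<Rightarrow> (nat \<Rightarrow> int) \<Rightarrow> (nat \<Rightarrow> int) \<Rightarrow> bool" where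
  "pmm_signs m n M c r \<longleftrightarrow>
     (\<forall>i\<in>{1..m}. c i \<in> {-1, 1}) \<and> (\<forall>j\<in>{1..n}. r j \<in> {-1, 1}) \<and>
     (\<forall>i\<in>{1..m}. \<forall>j\<in>{1..n}. M i j \<noteq> 0 \<longrightarrow> M i j = c i * r j)"

definition orient_arrow ::
  "nat \<Rightarrow> nat \<Rightarrow> (nat \<Rightarrow> int) \<Rightarrow> (nat \<Rightarrow> int) \<Rightarrow> (nat \<Rightarrow> nat) \<Rightarrow> (nat \<Rightarrow> nat) \<Rightarrow> (nat \<Rightarrow> nat)
     \<Rightarrow> nat \<Rightarrow> nat \<Rightarrow> bool" where
  "orient_arrow m n c r pi vv hh p q \<longleftrightarrow>
     (\<exists>i\<in>{1..m}. in_col vv i p \<and> in_col vv i q \<and> (if c i = 1 then p < q else q < p)) \<or>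
     (\<exists>j\<in>{1..n}. in_row pi hh j p \<and> in_row pi hh j q \<and> (if r j = 1 then pi p < pi q else pi q < pi p))"

(* gridded M-coil: ordering sigma (sigma k = k-th point v_k), labelling lab of the cycle cells *)
definition is_gridded_coil ::
  "nat \<Rightarrow> nat \<Rightarrow> (nat \<Rightarrow> nat \<Rightarrow> int) \<Rightarrow> (nat \<Rightarrow> int) \<Rightarrow> (nat \<Rightarrow> int) \<Rightarrow> nat \<Rightarrow> (nat \<Rightarrow> nat)
     \<Rightarrow> (nat \<Rightarrow> nat) \<Rightarrow> (nat \<Rightarrow> nat) \<Rightarrow> bool" where
  "is_gridded_coil m n M c r L pi vv hh \<longleftrightarrow>
     is_gridding m n M L pi vv hh \<and>
     (let C = the_cycle m n M; l = card C in
       L > l \<and>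
       (\<exists>sigma lab. bij_betw sigma {1..L} {1..L} \<and> bij_betw lab {1..l} C \<and>
          (\<forall>k\<in>{1..L}. in_cell pi vv hh (lab ((k - 1) mod l + 1)) (sigma k)) \<and>
          (\<forall>k. 1 < k \<and> k \<le> L \<longrightarrow> orient_arrow m n c r pi vv hh (sigma (k - 1)) (sigma k)) \<and>
          (\<forall>k. l + 1 < k \<and> k \<le> L \<longrightarrow> orient_arrow m n c r pi vv hh (sigma k) (sigma (k - l - 1))) \<and>
          orient_arrow m n c r pi vv hh (sigma (l + 1)) (sigma 1)))"

definition is_coil ::
  "nat \<Rightarrow> nat \<Rightarrow> (nat \<Rightarrow> nat \<Rightarrow> int) \<Rightarrow> (nat \<Rightarrow> int) \<Rightarrow> (nat \<Rightarrow> int) \<Rightarrow> nat \<Rightarrow> (nat \<Rightarrow> nat) \<Rightarrow> bool" where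
  "is_coil m n M c r L pi \<longleftrightarrow> is_perm L pi \<and> (\<exists>vv hh. is_gridded_coil m n M c r L pi vv hh)"

definition misplaced ::
  "nat \<Rightarrow> nat \<Rightarrow> (nat \<Rightarrow> nat \<Rightarrow> int) \<Rightarrow> nat \<Rightarrow> (nat \<Rightarrow> nat) \<Rightarrow> (nat \<Rightarrow> nat) \<Rightarrow> (nat \<Rightarrow> nat) \<Rightarrow> nat set" where
  "misplaced m n M L pi vv hh = {p\<in>{1..L}. \<not> (\<exists>ij\<in>the_cycle m n M. in_cell pi vv hh ij p)}"

end

theory Submission
  imports Defs
begin


fun edgecell :: "nat + nat \<Rightarrow> nat + nat \<Rightarrow> nat \<times> nat" where
  "edgecell (Inl a) (Inr b) = (a, b)"
| "edgecell (Inr b) (Inl a) = (a, b)"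
| "edgecell _ _ = (0, 0)"

lemma suc_mod_ne: "t < k \<Longrightarrow> 2 \<le> k \<Longrightarrow> t \<noteq> Suc t mod k"
  by (cases "Suc t < k") (auto simp: mod_Suc)

lemma suc_mod_inj: "Suc t mod k = Suc t' mod k \<Longrightarrow> t < k \<Longrightarrow> t' < k \<Longrightarrow> t = t'"
  by (cases "Suc t < k"; cases "Suc t' < k") (auto simp: mod_Suc split: if_splits)

lemma card_cycle_param:
  assumes "inj_on ic {0..<k}" "inj_on jc {0..<k}" "k \<ge> 2"
  shows "card ((\<lambda>t. (ic t, jc t)) ` {0..<k} \<union> (\<lambda>t. (ic (Suc t mod k), jc t)) ` {0..<k}) = 2 * k"
proof -
  have i1: "inj_on (\<lambda>t. (ic t, jc t)) {0..<k}" using assms(2) by (auto simp: inj_on_def)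
  have i2: "inj_on (\<lambda>t. (ic (Suc t mod k), jc t)) {0..<k}" using assms(2) by (auto simp: inj_on_def)
  have disj: "(\<lambda>t. (ic t, jc t)) ` {0..<k} \<inter> (\<lambda>t. (ic (Suc t mod k), jc t)) ` {0..<k} = {}"
  proof (rule ccontr)
    assume "\<not> ?thesis"
    then obtain t t' where tt: "t < k" "t' < k" "ic t = ic (Suc t' mod k)" "jc t = jc t'" by auto
    then have "t = t'" using assms(2) by (auto simp: inj_on_def)
    moreover have "Suc t' mod k < k" using assms(3) by simp
    ultimately have "t = Suc t mod k" using tt assms(1) by (auto simp: inj_on_def)
    then show False using tt(1) assms(3) suc_mod_ne by metis
  qed
  show ?thesis
    by (simp add: card_Un_disjoint disj card_image i1 i2)
qed

lemma cycle_card: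
  assumes "is_cycle m n M C"
  shows "\<exists>k\<ge>2. card C = 2 * k"
proof -
  obtain k ic jc where k: "k \<ge> 2" "inj_on ic {0..<k}" "inj_on jc {0..<k}"
    and C: "C = (\<lambda>t. (ic t, jc t)) ` {0..<k} \<union> (\<lambda>t. (ic (Suc t mod k), jc t)) ` {0..<k}"
    using assms(1) unfolding is_cycle_def by blast
  show ?thesis using card_cycle_param[OF k(2,3,1)] k(1) C by blast
qed

lemma pigeon3:
  assumes "\<And>X Y. X \<in> A \<Longrightarrow> Y \<in> A \<Longrightarrow> f X = f Y \<Longrightarrow> X = Y"
    "\<And>X Y. X \<in> B \<Longrightarrow> Y \<in> B \<Longrightarrow> f X = f Y \<Longrightarrow> X = Y"
    "P \<in> A \<union> B" "Q \<in> A \<union> B" "R \<in> A \<union> B" "P \<noteq> Q" "Q \<noteq> R" "P \<noteq> R"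
    "f P = f Q" "f Q = f R"
  shows False
  using assms by (metis Un_iff)

lemma cycle_col2:
  assumes "is_cycle m n M C" "P \<in> C" "Q \<in> C" "R \<in> C" "P \<noteq> Q" "Q \<noteq> R" "P \<noteq> R"
    "fst P = fst Q" "fst Q = fst R"
  shows False
proof -
  obtain k ic jc where k: "k \<ge> 2" "inj_on ic {0..<k}" "inj_on jc {0..<k}"
    and C: "C = (\<lambda>t. (ic t, jc t)) ` {0..<k} \<union> (\<lambda>t. (ic (Suc t mod k), jc t)) ` {0..<k}"
    using assms(1) unfolding is_cycle_def by blast
  have A: "X = Y" if h: "X \<in> (\<lambda>t. (ic t, jc t)) ` {0..<k}" "Y \<in> (\<lambda>t. (ic t, jc t)) ` {0..<k}" "fst X = fst Y" for X Y
  proof -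
    obtain t t' where tt: "t < k" "t' < k" "X = (ic t, jc t)" "Y = (ic t', jc t')"
      using h(1,2) by auto
    then have "t = t'" using h(3) inj_onD[OF k(2)] by simp
    then show ?thesis using tt by simp
  qed
  have B: "X = Y" if h: "X \<in> (\<lambda>t. (ic (Suc t mod k), jc t)) ` {0..<k}" "Y \<in> (\<lambda>t. (ic (Suc t mod k), jc t)) ` {0..<k}" "fst X = fst Y" for X Y
  proof -
    obtain t t' where "t < k" "t' < k" "X = (ic (Suc t mod k), jc t)" "Y = (ic (Suc t' mod k), jc t')"
      using h(1,2) by auto
    moreover have "Suc t mod k < k" "Suc t' mod k < k" using k(1) by auto
    ultimately have "Suc t mod k = Suc t' mod k" using h(3) inj_onD[OF k(2)] by simp
    then have "t = t'" using \<open>t < k\<close> \<open>t' < k\<close> suc_mod_inj by blast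
    then show ?thesis using \<open>X = _\<close> \<open>Y = _\<close> by simp
  qed
  show False using pigeon3[of _ fst, OF A B] assms(2-9) C by blast
qed

lemma cycle_row2:
  assumes "is_cycle m n M C" "P \<in> C" "Q \<in> C" "R \<in> C" "P \<noteq> Q" "Q \<noteq> R" "P \<noteq> R"
    "snd P = snd Q" "snd Q = snd R"
  shows False
proof -
  obtain k ic jc where k: "k \<ge> 2" "inj_on ic {0..<k}" "inj_on jc {0..<k}"
    and C: "C = (\<lambda>t. (ic t, jc t)) ` {0..<k} \<union> (\<lambda>t. (ic (Suc t mod k), jc t)) ` {0..<k}"
    using assms(1) unfolding is_cycle_def by blast
  have A: "X = Y" if h: "X \<in> (\<lambda>t. (ic t, jc t)) ` {0..<k}" "Y \<in> (\<lambda>t. (ic t, jc t)) ` {0..<k}" "snd X = snd Y" for X Y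
  proof -
    obtain t t' where tt: "t < k" "t' < k" "X = (ic t, jc t)" "Y = (ic t', jc t')"
      using h(1,2) by auto
    then have "t = t'" using h(3) inj_onD[OF k(3)] by simp
    then show ?thesis using tt by simp
  qed
  have B: "X = Y" if h: "X \<in> (\<lambda>t. (ic (Suc t mod k), jc t)) ` {0..<k}" "Y \<in> (\<lambda>t. (ic (Suc t mod k), jc t)) ` {0..<k}" "snd X = snd Y" for X Y
  proof -
    obtain t t' where tt: "t < k" "t' < k" "X = (ic (Suc t mod k), jc t)" "Y = (ic (Suc t' mod k), jc t')"
      using h(1,2) by auto
    then have "t = t'" using h(3) inj_onD[OF k(3)] by simp
    then show ?thesis using tt by simp
  qed
  show False using pigeon3[of _ snd, OF A B] assms(2-9) C by blast
qed

lemma per_add: fixes d v q :: nat shows "(\<And>u. y (u + d) = y u) \<Longrightarrow> y (v + d * q) = y v"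
proof (induction q)
  case 0 then show ?case by simp
next
  case (Suc q)
  have "y (v + d * Suc q) = y ((v + d * q) + d)" by (simp add: algebra_simps)
  also have "\<dots> = y (v + d * q)" using Suc.prems by blast
  finally show ?case using Suc by simp
qed

lemma per_mod: fixes d u :: nat shows "(\<And>u. y (u + d) = y u) \<Longrightarrow> y u = y (u mod d)"
proof -
  assume a: "\<And>u. y (u + d) = y u"
  have "u mod d + d * (u div d) = u" by simp
  then show ?thesis using per_add[of y d "u mod d" "u div d", OF a] by simp
qed

lemma per_modeq: fixes d u v :: nat shows "(\<And>u. y (u + d) = y u) \<Longrightarrow> u mod d = v mod d \<Longrightarrow> y u = y v"
  using per_mod[of y d] by metis

lemma mod_suc_cong: "(a::nat) mod N = b mod N \<Longrightarrow> Suc a mod N = Suc b mod N"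
  by (metis mod_Suc_eq)

lemma walk_parity:
  assumes "\<And>u. isl (y u) = (\<not> isl (y (Suc u)))"
  shows "isl (y (p + j)) = (isl (y p) = even j)"
proof (induction j)
  case 0 then show ?case by simp
next
  case (Suc j) then show ?case using assms[of "p + j"] by auto
qed

definition edge_ok :: "nat \<Rightarrow> nat \<Rightarrow> (nat \<Rightarrow> nat \<Rightarrow> int) \<Rightarrow> nat \<times> nat \<Rightarrow> bool" where
  "edge_ok m n M e \<longleftrightarrow> e \<in> {1..m} \<times> {1..n} \<and> M (fst e) (snd e) \<noteq> 0"





lemma walk_cycle:
  assumes per: "\<And>u. y (u + d) = y u" and inj: "inj_on y {0..<d}"
    and alt: "\<And>u. isl (y u) = (\<not> isl (y (Suc u)))" and y0: "isl (y 0)"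
    and d: "d = 2 * k" "k \<ge> 2"
    and edge: "\<And>u. edge_ok m n M (edgecell (y u) (y (Suc u)))"
  shows "is_cycle m n M (range (\<lambda>u. edgecell (y u) (y (Suc u)))) \<and>
         card (range (\<lambda>u. edgecell (y u) (y (Suc u)))) = d"
proof -
  have ev: "isl (y u) = even u" for u using walk_parity[of y 0 u, OF alt] y0 by simp
  define ic where "ic s = projl (y (2*s))" for s
  define jc where "jc s = projr (y (2*s+1))" for s
  have yi: "y (2*s) = Inl (ic s)" for s
    using ev[of "2*s"] by (cases "y (2*s)") (auto simp: ic_def)
  have yj: "y (2*s+1) = Inr (jc s)" for s
    using ev[of "2*s+1"] by (cases "y (2*s+1)") (auto simp: jc_def)
  have y2: "y (2*s+2) = Inl (ic (Suc s mod k))" if "s < k" for s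
  proof (cases "Suc s < k")
    case True then show ?thesis using yi[of "Suc s"] by simp
  next
    case False
    then have "Suc s = k" using that by simp
    then have "2*s+2 = 0 + d" using d by simp
    then have "y (2*s+2) = y 0" using per[of 0] by simp
    then show ?thesis using yi[of 0] \<open>Suc s = k\<close> by simp
  qed
  have e1: "edgecell (y (2*s)) (y (Suc (2*s))) = (ic s, jc s)" for s
    using yi yj by simp
  have e2: "edgecell (y (2*s+1)) (y (Suc (2*s+1))) = (ic (Suc s mod k), jc s)" if "s < k" for s
    using yj y2[OF that] by simp
  have injic: "inj_on ic {0..<k}"
  proof (rule inj_onI)
    fix a b assume "a \<in> {0..<k}" "b \<in> {0..<k}" "ic a = ic b"
    then have "y (2*a) = y (2*b)" using yi by simp
    then show "a = b" using inj_onD[OF inj] \<open>a \<in> _\<close> \<open>b \<in> _\<close> d by fastforce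
  qed
  have injjc: "inj_on jc {0..<k}"
  proof (rule inj_onI)
    fix a b assume "a \<in> {0..<k}" "b \<in> {0..<k}" "jc a = jc b"
    then have "y (2*a+1) = y (2*b+1)" using yj by simp
    then show "a = b" using inj_onD[OF inj] \<open>a \<in> _\<close> \<open>b \<in> _\<close> d by fastforce
  qed
  let ?A = "(\<lambda>t. (ic t, jc t)) ` {0..<k}"
  let ?B = "(\<lambda>t. (ic (Suc t mod k), jc t)) ` {0..<k}"
  have R: "range (\<lambda>u. edgecell (y u) (y (Suc u))) = ?A \<union> ?B"
  proof
    show "range (\<lambda>u. edgecell (y u) (y (Suc u))) \<subseteq> ?A \<union> ?B"
    proof
      fix e assume "e \<in> range (\<lambda>u. edgecell (y u) (y (Suc u)))"
      then obtain u where e: "e = edgecell (y u) (y (Suc u))" by auto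
      define v where "v = u mod d"
      have vd: "v < d" using d by (simp add: v_def)
      have "y u = y v" using per_mod[of y d, OF per] v_def by simp
      moreover have "y (Suc u) = y (Suc v)"
      proof -
        have "u mod d = v mod d" by (simp add: v_def)
        then have "Suc u mod d = Suc v mod d" by (rule mod_suc_cong)
        then show ?thesis by (rule per_modeq[of y d, OF per])
      qed
      ultimately have e': "e = edgecell (y v) (y (Suc v))" using e by simp
      show "e \<in> ?A \<union> ?B"
      proof (cases "even v")
        case True
        then obtain s where s: "v = 2*s" by (auto elim: evenE)
        then have "s < k" using vd d by simp
        then show ?thesis using e' e1[of s] s by auto
      next
        case False
        then obtain s where s: "v = 2*s+1" by (auto elim: oddE)
        then have "s < k" using vd d by simp
        then show ?thesis using e' e2[of s] s by auto
      qed
    qed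
  next
    show "?A \<union> ?B \<subseteq> range (\<lambda>u. edgecell (y u) (y (Suc u)))"
    proof
      fix e assume "e \<in> ?A \<union> ?B"
      then show "e \<in> range (\<lambda>u. edgecell (y u) (y (Suc u)))"
      proof
        assume "e \<in> ?A"
        then obtain s where s: "s < k" "e = (ic s, jc s)" by auto
        show ?thesis unfolding s(2) e1[of s, symmetric] by (rule rangeI)
      next
        assume "e \<in> ?B"
        then obtain s where s: "s < k" "e = (ic (Suc s mod k), jc s)" by auto
        show ?thesis unfolding s(2) e2[OF s(1), symmetric] by (rule rangeI)
      qed
    qed
  qed
  have ok1: "edge_ok m n M (ic s, jc s)" for s using edge[of "2*s"] e1[of s] by simp
  have ok2: "edge_ok m n M (ic (Suc s mod k), jc s)" if "s < k" for s
    using edge[of "2*s+1"] e2[OF that] by simp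
  have cyc: "is_cycle m n M (?A \<union> ?B)"
    unfolding is_cycle_def
  proof (intro exI conjI)
    show "2 \<le> k" by fact
    show "inj_on ic {0..<k}" by fact
    show "inj_on jc {0..<k}" by fact
    show "ic ` {0..<k} \<subseteq> {1..m}" using ok1 by (auto simp: edge_ok_def)
    show "jc ` {0..<k} \<subseteq> {1..n}" using ok1 by (auto simp: edge_ok_def)
    show "\<forall>t<k. M (ic t) (jc t) \<noteq> 0 \<and> M (ic (Suc t mod k)) (jc t) \<noteq> 0"
      using ok1 ok2 by (auto simp: edge_ok_def)
  qed (rule refl)
  show ?thesis using R cyc card_cycle_param[OF injic injjc d(2)] d(1) by simp
qed

lemma walk_in_cycle:
  assumes uc: "unicyclic m n M" and cyc: "is_cycle m n M C" and N: "N = card C"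
    and per: "\<And>u. x (u + N) = x u"
    and alt: "\<And>u. isl (x u) = (\<not> isl (x (Suc u)))"
    and nb: "\<And>u. x u \<noteq> x (Suc (Suc u))"
    and edge: "\<And>u. edge_ok m n M (edgecell (x u) (x (Suc u)))"
  shows "edgecell (x u) (x (Suc u)) \<in> C"
proof -
  obtain kC where kC: "kC \<ge> 2" "card C = 2 * kC" using cycle_card[OF cyc] by blast
  have N4: "N \<ge> 4" using kC N by simp
  have ex: "\<exists>d. 0 < d \<and> (\<exists>p. x p = x (p + d))"
  proof -
    have "x 0 = x (0 + N)" using per[of 0] by simp
    then have "0 < N \<and> (\<exists>p. x p = x (p + N))" using N4 by (intro conjI exI[of _ 0]) auto
    then show ?thesis by blast
  qed
  define d where "d = (LEAST d. 0 < d \<and> (\<exists>p. x p = x (p + d)))"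
  have dP: "0 < d \<and> (\<exists>p. x p = x (p + d))"
    unfolding d_def by (rule LeastI_ex[OF ex])
  then obtain p where p: "x p = x (p + d)" and d0: "0 < d" by blast
  have dmin: "x q \<noteq> x (q + d')" if "0 < d'" "d' < d" for q d'
  proof
    assume "x q = x (q + d')"
    then have "0 < d' \<and> (\<exists>p. x p = x (p + d'))" using that by blast
    then have "d \<le> d'" unfolding d_def by (rule Least_le)
    then show False using that by simp
  qed
  have "isl (x (p + d)) = (isl (x p) = even d)" by (rule walk_parity[of x, OF alt])
  then have evd: "even d" using p by auto
  have "d \<noteq> 2" using nb[of p] p by (metis add_2_eq_Suc')
  obtain k where k: "d = 2 * k" using evd by (auto elim: evenE)
  then have k2: "k \<ge> 2" using d0 \<open>d \<noteq> 2\<close> by presburger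
  have xinj: "a = b" if "x (p + a) = x (p + b)" "a < d" "b < d" for a b
  proof (rule ccontr)
    assume "a \<noteq> b"
    then consider "a < b" | "b < a" by linarith
    then show False
    proof cases
      case 1
      have "b - a < d" "0 < b - a" using 1 that by linarith+
      then have "x (p + a) \<noteq> x ((p + a) + (b - a))" by (rule dmin[rotated])
      then show False using that 1 by simp
    next
      case 2
      have "a - b < d" "0 < a - b" using 2 that by linarith+
      then have "x (p + b) \<noteq> x ((p + b) + (a - b))" by (rule dmin[rotated])
      then show False using that 2 by simp
    qed
  qed
  define y where "y u = x (p + u mod d)" for u
  have ysuc: "y (Suc u) = x (Suc (p + u mod d))" for u
  proof (cases "Suc (u mod d) = d")
    case True
    then have "Suc u mod d = 0" by (simp add: mod_Suc)
    then have "y (Suc u) = x (p + d)" using p by (simp add: y_def)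
    also have "p + d = Suc (p + u mod d)" using True by simp
    finally show ?thesis .
  next
    case False
    then have "Suc u mod d = Suc (u mod d)" by (simp add: mod_Suc)
    then show ?thesis by (simp add: y_def)
  qed
  have yper: "y (u + d) = y u" for u by (simp add: y_def)
  have yinj: "inj_on y {0..<d}"
    by (rule inj_onI) (use xinj in \<open>auto simp: y_def\<close>)
  have yalt: "isl (y u) = (\<not> isl (y (Suc u)))" for u
    using alt[of "p + u mod d"] ysuc[of u] by (simp add: y_def)
  have yedge_eq: "edgecell (y u) (y (Suc u)) = edgecell (x (p + u mod d)) (x (Suc (p + u mod d)))" for u
    using ysuc[of u] by (simp add: y_def)
  have yedge: "edge_ok m n M (edgecell (y u) (y (Suc u)))" for u
    using edge yedge_eq by simp
  define D where "D = range (\<lambda>u. edgecell (y u) (y (Suc u)))"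
  have D: "is_cycle m n M D \<and> card D = d"
  proof (cases "isl (y 0)")
    case True
    show ?thesis unfolding D_def by (rule walk_cycle[OF yper yinj yalt True k k2 yedge])
  next
    case False
    define z where "z u = y (Suc u)" for u
    have zper: "z (u + d) = z u" for u unfolding z_def using yper[of "Suc u"] by (simp only: add_Suc)
    have zinj: "inj_on z {0..<d}"
    proof (rule inj_onI)
      fix a b assume ab: "a \<in> {0..<d}" "b \<in> {0..<d}" "z a = z b"
      have ya: "y (Suc a) = y (Suc a mod d)" by (rule per_mod[of y d, OF yper])
      have yb: "y (Suc b) = y (Suc b mod d)" by (rule per_mod[of y d, OF yper])
      have eq: "y (Suc a mod d) = y (Suc b mod d)"
        using ab(3) ya yb unfolding z_def by metis
      have i1: "Suc a mod d \<in> {0..<d}" using d0 by simp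
      have i2: "Suc b mod d \<in> {0..<d}" using d0 by simp
      have "Suc a mod d = Suc b mod d" by (rule inj_onD[OF yinj eq i1 i2])
      moreover have "a < d" "b < d" using ab(1,2) by auto
      ultimately show "a = b" by (rule suc_mod_inj)
    qed
    have zalt: "isl (z u) = (\<not> isl (z (Suc u)))" for u unfolding z_def by (rule yalt)
    have z0: "isl (z 0)" using False yalt[of 0] unfolding z_def by simp
    have zedge: "edge_ok m n M (edgecell (z u) (z (Suc u)))" for u unfolding z_def by (rule yedge)
    have Dz: "range (\<lambda>u. edgecell (z u) (z (Suc u))) = D"
    proof
      show "range (\<lambda>u. edgecell (z u) (z (Suc u))) \<subseteq> D"
      proof
        fix e assume "e \<in> range (\<lambda>u. edgecell (z u) (z (Suc u)))"
        then obtain u where "e = edgecell (z u) (z (Suc u))" by blast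
        then have "e = edgecell (y (Suc u)) (y (Suc (Suc u)))" unfolding z_def by simp
        then show "e \<in> D" unfolding D_def by (rule range_eqI)
      qed
      show "D \<subseteq> range (\<lambda>u. edgecell (z u) (z (Suc u)))"
      proof
        fix e assume "e \<in> D"
        then obtain u where e: "e = edgecell (y u) (y (Suc u))" unfolding D_def by auto
        have "u + d = Suc (u + d - 1)" using d0 by simp
        then have "e = edgecell (z (u + d - 1)) (z (Suc (u + d - 1)))"
          unfolding e z_def using yper[of u] yper[of "Suc u"] by simp
        then show "e \<in> range (\<lambda>u. edgecell (z u) (z (Suc u)))" by (rule range_eqI)
      qed
    qed
    show ?thesis using walk_cycle[OF zper zinj zalt z0 k k2 zedge] Dz by simp
  qed
  have "D = C" using uc D cyc unfolding unicyclic_def by blast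
  then have dNe: "d = N" using D N by simp
  define v where "v = u + N * p - p"
  have "p \<le> N * p" using N4 by simp
  then have vp: "p + v = u + N * p"
    unfolding v_def by linarith
  have m1: "(p + v mod d) mod N = u mod N"
  proof -
    have "(p + v mod d) mod N = (p + v) mod N" using dNe by (simp add: mod_add_right_eq)
    also have "\<dots> = (u + N * p) mod N" using vp by simp
    also have "\<dots> = u mod N" by simp
    finally show ?thesis .
  qed
  have e1: "x (p + v mod d) = x u" by (rule per_modeq[of x N, OF per m1])
  have m2: "Suc (p + v mod d) mod N = Suc u mod N" using m1 by (rule mod_suc_cong)
  have e2: "x (Suc (p + v mod d)) = x (Suc u)" by (rule per_modeq[of x N, OF per m2])
  have "edgecell (x u) (x (Suc u)) = edgecell (y v) (y (Suc v))"
    using yedge_eq[of v] e1 e2 by simp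
  then have "edgecell (x u) (x (Suc u)) \<in> D" unfolding D_def by (rule range_eqI)
  then show ?thesis using \<open>D = C\<close> by simp
qed




lemma mono_seq:
  assumes "\<forall>i<K. (g::nat\<Rightarrow>nat) i \<le> g (Suc i)" "i \<le> j" "j \<le> K"
  shows "g i \<le> g j"
  using assms(2,3)
proof (induction j)
  case 0 then show ?case by simp
next
  case (Suc j)
  show ?case
  proof (cases "i = Suc j")
    case True then show ?thesis by simp
  next
    case False
    then have "g i \<le> g j" using Suc by simp
    also have "g j \<le> g (Suc j)" using assms(1) Suc.prems by simp
    finally show ?thesis .
  qed
qed

definition idx :: "(nat \<Rightarrow> nat) \<Rightarrow> nat \<Rightarrow> nat" where
  "idx g x = (LEAST i. x \<le> g i)"

lemma idx_props:
  assumes mono: "\<forall>i<K. g i \<le> g (Suc i)" and g0: "g 0 = 0" and gK: "g K = L"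
    and x: "1 \<le> x" "x \<le> L"
  shows "1 \<le> idx g x \<and> idx g x \<le> K \<and> g (idx g x - 1) < x \<and> x \<le> g (idx g x)"
proof -
  have ex: "x \<le> g K" using gK x by simp
  have le: "idx g x \<le> K" unfolding idx_def by (rule Least_le) (rule ex)
  have xi: "x \<le> g (idx g x)" unfolding idx_def by (rule LeastI[of _ K]) (rule ex)
  have ne0: "idx g x \<noteq> 0"
  proof
    assume "idx g x = 0"
    then show False using xi g0 x by simp
  qed
  have lt1: "idx g x - 1 < idx g x" using ne0 by simp
  have "\<not> x \<le> g (idx g x - 1)"
    using not_less_Least[of "idx g x - 1" "\<lambda>i. x \<le> g i"] lt1 unfolding idx_def by blast
  then show ?thesis using le xi ne0 by simp
qed

lemma idx_unique:
  assumes mono: "\<forall>i<K. g i \<le> g (Suc i)" and "1 \<le> i" "i \<le> K" "g (i - 1) < x" "x \<le> g i"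
  shows "idx g x = i"
  unfolding idx_def
proof (rule Least_equality)
  show "x \<le> g i" by fact
next
  fix j assume j: "x \<le> g j"
  show "i \<le> j"
  proof (rule ccontr)
    assume "\<not> i \<le> j"
    then have "j \<le> i - 1" "i - 1 \<le> K" using assms by auto
    then have "g j \<le> g (i - 1)" using mono_seq[OF mono] by blast
    then show False using j assms(4) by simp
  qed
qed

lemma idx_mono:
  assumes "x \<le> y" "y \<le> g K"
  shows "idx g x \<le> idx g y"
proof -
  have "y \<le> g (idx g y)" unfolding idx_def by (rule LeastI[of _ K]) (rule assms(2))
  then have "x \<le> g (idx g y)" using assms(1) by simp
  then show ?thesis unfolding idx_def by (rule Least_le)
qed

lemma idx_sep:
  assumes mono: "\<forall>i<K. g i \<le> g (Suc i)" and g0: "g 0 = 0" and gK: "g K = L"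
    and x: "1 \<le> x" "x \<le> L" and y: "1 \<le> y" "y \<le> L" and lt: "idx g x < idx g y"
  shows "x \<le> g (idx g x) \<and> g (idx g x) < y"
proof -
  have px: "1 \<le> idx g x \<and> idx g x \<le> K \<and> g (idx g x - 1) < x \<and> x \<le> g (idx g x)"
    by (rule idx_props[OF mono g0 gK x])
  have py: "1 \<le> idx g y \<and> idx g y \<le> K \<and> g (idx g y - 1) < y \<and> y \<le> g (idx g y)"
    by (rule idx_props[OF mono g0 gK y])
  have h1: "idx g x \<le> idx g y - 1" "idx g y - 1 \<le> K" using lt py by auto
  have "g (idx g x) \<le> g (idx g y - 1)"
    by (rule mono_seq[OF mono h1])
  then show ?thesis using px py by simp
qed

lemma idx_side:
  assumes "idx g x = idx g x'" "idx g x \<noteq> idx g y" "x \<le> g K" "x' \<le> g K" "y \<le> g K"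
  shows "(x < y) = (x' < y)"
proof -
  have "idx g x \<le> idx g y" if "x < y" for x using that idx_mono[of x y g K] assms by simp
  have A: "idx g u \<le> idx g v" if "u \<le> v" "v \<le> g K" for u v using idx_mono that by blast
  show ?thesis
  proof
    assume "x < y"
    then have "idx g x < idx g y" using A[of x y] assms by simp
    show "x' < y"
    proof (rule ccontr)
      assume "\<not> x' < y"
      then have "idx g y \<le> idx g x'" using A[of y x'] assms by simp
      then show False using \<open>idx g x < idx g y\<close> assms(1) by simp
    qed
  next
    assume "x' < y"
    then have "idx g x' < idx g y" using A[of x' y] assms by simp
    show "x < y"
    proof (rule ccontr)
      assume "\<not> x < y"
      then have "idx g y \<le> idx g x" using A[of y x] assms by simp
      then show False using \<open>idx g x' < idx g y\<close> assms(1) by simp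
    qed
  qed
qed

definition gcell :: "(nat \<Rightarrow> nat) \<Rightarrow> (nat \<Rightarrow> nat) \<Rightarrow> (nat \<Rightarrow> nat) \<Rightarrow> nat \<Rightarrow> nat \<times> nat" where
  "gcell pi vv hh p = (idx vv p, idx hh (pi p))"

lemma gcell_in:
  assumes g: "is_gridding m n M L pi vv hh" and p: "p \<in> {1..L}" "pi p \<in> {1..L}"
  shows "gcell pi vv hh p \<in> {1..m} \<times> {1..n} \<and> in_cell pi vv hh (gcell pi vv hh p) p"
proof -
  have mv: "\<forall>i<m. vv i \<le> vv (Suc i)" "vv 0 = 0" "vv m = L" using g unfolding is_gridding_def by auto
  have mh: "\<forall>j<n. hh j \<le> hh (Suc j)" "hh 0 = 0" "hh n = L" using g unfolding is_gridding_def by auto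
  have a: "1 \<le> idx vv p \<and> idx vv p \<le> m \<and> vv (idx vv p - 1) < p \<and> p \<le> vv (idx vv p)"
    using idx_props[OF mv, of p] p by simp
  have b: "1 \<le> idx hh (pi p) \<and> idx hh (pi p) \<le> n \<and> hh (idx hh (pi p) - 1) < pi p \<and> pi p \<le> hh (idx hh (pi p))"
    using idx_props[OF mh, of "pi p"] p by simp
  show ?thesis using a b unfolding gcell_def in_cell_def in_col_def in_row_def by simp
qed

lemma gcell_unique:
  assumes g: "is_gridding m n M L pi vv hh" and ij: "ij \<in> {1..m} \<times> {1..n}"
    and c: "in_cell pi vv hh ij p"
  shows "gcell pi vv hh p = ij"
proof -
  have mv: "\<forall>i<m. vv i \<le> vv (Suc i)" using g unfolding is_gridding_def by auto
  have mh: "\<forall>j<n. hh j \<le> hh (Suc j)" using g unfolding is_gridding_def by auto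
  have "idx vv p = fst ij"
    by (rule idx_unique[OF mv]) (use ij c in \<open>auto simp: in_cell_def in_col_def\<close>)
  moreover have "idx hh (pi p) = snd ij"
    by (rule idx_unique[OF mh]) (use ij c in \<open>auto simp: in_cell_def in_row_def\<close>)
  ultimately show ?thesis unfolding gcell_def by (cases ij) simp
qed

lemma gcell_mono:
  assumes g: "is_gridding m n M L pi vv hh" and p: "p \<in> {1..L}" "pi p \<in> {1..L}"
    and q: "q \<in> {1..L}" "pi q \<in> {1..L}" and same: "gcell pi vv hh p = gcell pi vv hh q"
    and pq: "p < q"
  shows "(M (fst (gcell pi vv hh p)) (snd (gcell pi vv hh p)) = 1 \<longrightarrow> pi p < pi q) \<and>
         (M (fst (gcell pi vv hh p)) (snd (gcell pi vv hh p)) = -1 \<longrightarrow> pi q < pi p) \<and>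
         M (fst (gcell pi vv hh p)) (snd (gcell pi vv hh p)) \<noteq> 0"
proof -
  obtain i j where ij: "gcell pi vv hh p = (i, j)" by fastforce
  have P: "(i, j) \<in> {1..m} \<times> {1..n}" "in_cell pi vv hh (i, j) p" using gcell_in[OF g p] ij by auto
  have Q: "in_cell pi vv hh (i, j) q" using gcell_in[OF g q] ij same by auto
  have G: "(M i j = 0 \<longrightarrow> (\<forall>p\<in>{1..L}. \<not> in_cell pi vv hh (i, j) p)) \<and>
        (M i j = 1 \<longrightarrow> (\<forall>p\<in>{1..L}. \<forall>q\<in>{1..L}.
             in_cell pi vv hh (i, j) p \<and> in_cell pi vv hh (i, j) q \<and> p < q \<longrightarrow> pi p < pi q)) \<and>
        (M i j = -1 \<longrightarrow> (\<forall>p\<in>{1..L}. \<forall>q\<in>{1..L}.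
             in_cell pi vv hh (i, j) p \<and> in_cell pi vv hh (i, j) q \<and> p < q \<longrightarrow> pi p > pi q))"
    using g P(1) unfolding is_gridding_def by blast
  show ?thesis using G P Q p q pq ij by auto
qed




definition PC :: "(nat \<Rightarrow> int) \<Rightarrow> nat \<Rightarrow> nat \<Rightarrow> nat \<Rightarrow> bool" where
  "PC c X p q \<longleftrightarrow> (if c X = 1 then p < q else q < p)"

definition PR :: "(nat \<Rightarrow> int) \<Rightarrow> (nat \<Rightarrow> nat) \<Rightarrow> nat \<Rightarrow> nat \<Rightarrow> nat \<Rightarrow> bool" where
  "PR r pi Y p q \<longleftrightarrow> (if r Y = 1 then pi p < pi q else pi q < pi p)"

lemma PC_trans: "PC c X a b \<Longrightarrow> PC c X b d \<Longrightarrow> PC c X a d"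
  unfolding PC_def by (auto split: if_splits)

lemma PR_trans: "PR r pi Y a b \<Longrightarrow> PR r pi Y b d \<Longrightarrow> PR r pi Y a d"
  unfolding PR_def by (auto split: if_splits)

definition sep :: "nat \<Rightarrow> nat \<Rightarrow> nat \<Rightarrow> bool" where
  "sep t a b \<longleftrightarrow> (a \<le> t \<and> t < b) \<or> (b \<le> t \<and> t < a)"

lemma sep_contra:
  "(b < a \<and> b' < a' \<and> a' \<le> b) \<or> (a < b \<and> a' < b' \<and> b \<le> a') \<Longrightarrow> sep t a b \<Longrightarrow> sep t a' b' \<Longrightarrow> False"
  unfolding sep_def by auto

locale coilctx =
  fixes m n :: nat and M :: "nat \<Rightarrow> nat \<Rightarrow> int" and c r :: "nat \<Rightarrow> int"
    and L :: nat and pi vo ho vv hh sg :: "nat \<Rightarrow> nat" and lab :: "nat \<Rightarrow> nat \<times> nat"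
    and C :: "(nat \<times> nat) set" and l :: nat
  assumes gm: "gridding_matrix m n M" and uc: "unicyclic m n M" and ps: "pmm_signs m n M c r"
    and perm: "is_perm L pi" and go: "is_gridding m n M L pi vo ho"
    and gn: "is_gridding m n M L pi vv hh"
    and Cdef: "C = the_cycle m n M" and ldef: "l = card C" and Ll: "l < L"
    and sgb: "bij_betw sg {1..L} {1..L}" and labb: "bij_betw lab {1..l} C"
    and incell: "\<forall>k\<in>{1..L}. in_cell pi vo ho (lab ((k - 1) mod l + 1)) (sg k)"
    and c2: "\<forall>k. 1 < k \<and> k \<le> L \<longrightarrow> orient_arrow m n c r pi vo ho (sg (k - 1)) (sg k)"
    and c3: "\<forall>k. l + 1 < k \<and> k \<le> L \<longrightarrow> orient_arrow m n c r pi vo ho (sg k) (sg (k - l - 1))"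
    and c4: "orient_arrow m n c r pi vo ho (sg (l + 1)) (sg 1)"
begin

lemma cyc: "is_cycle m n M C"
  using uc unfolding unicyclic_def Cdef the_cycle_def by (rule theI')

lemma C_range: "P \<in> C \<Longrightarrow> P \<in> {1..m} \<times> {1..n} \<and> M (fst P) (snd P) \<noteq> 0"
proof -
  assume P: "P \<in> C"
  obtain k ic jc where k: "k \<ge> 2" "ic ` {0..<k} \<subseteq> {1..m}" "jc ` {0..<k} \<subseteq> {1..n}"
    and nz: "\<forall>t<k. M (ic t) (jc t) \<noteq> 0 \<and> M (ic (Suc t mod k)) (jc t) \<noteq> 0"
    and C: "C = (\<lambda>t. (ic t, jc t)) ` {0..<k} \<union> (\<lambda>t. (ic (Suc t mod k), jc t)) ` {0..<k}"
    using cyc unfolding is_cycle_def by blast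
  have sk: "Suc t mod k < k" for t using k(1) by simp
  have icr: "t < k \<Longrightarrow> ic t \<in> {1..m}" for t using subsetD[OF k(2), of "ic t"] by simp
  have jcr: "t < k \<Longrightarrow> jc t \<in> {1..n}" for t using subsetD[OF k(3), of "jc t"] by simp
  from P[unfolded C] show ?thesis
  proof
    assume "P \<in> (\<lambda>t. (ic t, jc t)) ` {0..<k}"
    then obtain t where t: "t < k" "P = (ic t, jc t)" by auto
    then show ?thesis using icr[OF t(1)] jcr[OF t(1)] nz by simp
  next
    assume "P \<in> (\<lambda>t. (ic (Suc t mod k), jc t)) ` {0..<k}"
    then obtain t where t: "t < k" "P = (ic (Suc t mod k), jc t)" by auto
    then show ?thesis using icr[OF sk] jcr[OF t(1)] nz by simp
  qed
qed

lemma l4: "l \<ge> 4" and l_even: "even l"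
  using cycle_card[OF cyc] ldef by auto

definition ct :: "nat \<Rightarrow> nat" where "ct k = (k - 1) mod l + 1"

lemma ct_range: "ct k \<in> {1..l}"
proof -
  have "(k - 1) mod l < l" using l4 by simp
  then show ?thesis unfolding ct_def by simp
qed

lemma ct_per: "1 \<le> k \<Longrightarrow> ct (k + l) = ct k"
proof -
  assume "1 \<le> k"
  then have "k + l - 1 = (k - 1) + l" by simp
  then show ?thesis unfolding ct_def by simp
qed

lemma ct_perj: "1 \<le> k \<Longrightarrow> ct (k + j * l) = ct k"
proof (induction j)
  case 0 then show ?case by simp
next
  case (Suc j)
  have "ct (k + Suc j * l) = ct ((k + j * l) + l)" by (simp add: algebra_simps)
  also have "\<dots> = ct (k + j * l)" using Suc.prems by (intro ct_per) simp
  finally show ?case using Suc by simp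
qed

lemma ct_eq_class:
  assumes "1 \<le> i" "i < i'" "ct i = ct i'"
  shows "\<exists>j\<ge>1. i' = i + j * l"
proof -
  have e: "(i - 1) mod l = (i' - 1) mod l" using assms(3) unfolding ct_def by simp
  have le: "i - 1 \<le> i' - 1" using assms by simp
  have dv: "l dvd (i' - 1) - (i - 1)" by (rule iffD1[OF mod_eq_dvd_iff_nat[OF le] e[symmetric]])
  have d: "(i' - 1) - (i - 1) = i' - i" using assms by simp
  obtain j where j: "i' - i = l * j" using dv unfolding d by (erule dvdE)
  have "i' = i + (i' - i)" using assms by simp
  then have "i' = i + j * l" using j by (simp add: mult.commute)
  moreover have "j \<noteq> 0" using j assms by (metis mult_0_right zero_less_diff less_irrefl)
  ultimately show ?thesis by (intro exI[of _ j]) simp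
qed

lemma ct_ne1: "1 \<le> k \<Longrightarrow> ct k \<noteq> ct (k + 1)"
proof
  assume "1 \<le> k" "ct k = ct (k + 1)"
  then obtain j where "j \<ge> 1" "k + 1 = k + j * l" using ct_eq_class[of k "k+1"] by auto
  then have "j * l = 1" by simp
  then show False using l4 by simp
qed

lemma ct_ne2: "1 \<le> k \<Longrightarrow> ct k \<noteq> ct (k + 2)"
proof
  assume "1 \<le> k" "ct k = ct (k + 2)"
  then obtain j where "j \<ge> 1" "k + 2 = k + j * l" using ct_eq_class[of k "k+2"] by auto
  then have "j * l = 2" by simp
  moreover have "j * l \<ge> l" using \<open>j \<ge> 1\<close> by simp
  ultimately show False using l4 by simp
qed

lemma pi_bij: "bij_betw pi {1..L} {1..L}" using perm unfolding is_perm_def .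

lemma pts: "k \<in> {1..L} \<Longrightarrow> sg k \<in> {1..L} \<and> pi (sg k) \<in> {1..L}"
  using bij_betwE[OF sgb] bij_betwE[OF pi_bij] by blast

lemma sg_inj: "k \<in> {1..L} \<Longrightarrow> k' \<in> {1..L} \<Longrightarrow> sg k = sg k' \<Longrightarrow> k = k'"
  using bij_betw_imp_inj_on[OF sgb] by (auto dest: inj_onD)

lemma pi_inj: "p \<in> {1..L} \<Longrightarrow> q \<in> {1..L} \<Longrightarrow> pi p = pi q \<Longrightarrow> p = q"
  using bij_betw_imp_inj_on[OF pi_bij] by (auto dest: inj_onD)

lemma lab_C: "k \<in> {1..l} \<Longrightarrow> lab k \<in> C"
  using bij_betwE[OF labb] by blast

lemma lab_inj: "k \<in> {1..l} \<Longrightarrow> k' \<in> {1..l} \<Longrightarrow> lab k = lab k' \<Longrightarrow> k = k'"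
  using bij_betw_imp_inj_on[OF labb] by (auto dest: inj_onD)

abbreviation "ocell \<equiv> gcell pi vo ho"
abbreviation "ncell \<equiv> gcell pi vv hh"

lemma oc: "k \<in> {1..L} \<Longrightarrow> ocell (sg k) = lab (ct k)"
  using gcell_unique[OF go, of "lab (ct k)" "sg k"] incell C_range[OF lab_C[OF ct_range]]
  unfolding ct_def by auto

lemma cell_ne: "1 \<le> i \<Longrightarrow> lab (ct i) \<noteq> lab (ct (i + 1))"
  using lab_inj[OF ct_range ct_range] ct_ne1 by blast

lemma cell_ne2: "1 \<le> i \<Longrightarrow> lab (ct i) \<noteq> lab (ct (i + 2))"
  using lab_inj[OF ct_range ct_range] ct_ne2 by blast


lemma omono: "\<forall>i<m. vo i \<le> vo (Suc i)" "\<forall>j<n. ho j \<le> ho (Suc j)"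
  using go unfolding is_gridding_def by auto

lemma nmono: "\<forall>i<m. vv i \<le> vv (Suc i)" "\<forall>j<n. hh j \<le> hh (Suc j)"
  "vv 0 = 0" "vv m = L" "hh 0 = 0" "hh n = L"
  using gn unfolding is_gridding_def by auto

lemma ocol: "i \<in> {1..m} \<Longrightarrow> in_col vo i p \<Longrightarrow> fst (ocell p) = i"
  unfolding gcell_def in_col_def by (auto intro: idx_unique[OF omono(1)])

lemma orow: "j \<in> {1..n} \<Longrightarrow> in_row pi ho j p \<Longrightarrow> snd (ocell p) = j"
  unfolding gcell_def in_row_def by (auto intro: idx_unique[OF omono(2)])

lemma arrow:
  assumes a: "orient_arrow m n c r pi vo ho p q"
  shows "(fst (ocell p) = fst (ocell q) \<and> PC c (fst (ocell p)) p q) \<or>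
         (snd (ocell p) = snd (ocell q) \<and> PR r pi (snd (ocell p)) p q)"
proof -
  from a consider
    (col) i where "i \<in> {1..m}" "in_col vo i p" "in_col vo i q" "if c i = 1 then p < q else q < p"
  | (row) j where "j \<in> {1..n}" "in_row pi ho j p" "in_row pi ho j q" "if r j = 1 then pi p < pi q else pi q < pi p"
    unfolding orient_arrow_def by blast
  then show ?thesis
  proof cases
    case col
    then have "fst (ocell p) = i" "fst (ocell q) = i" using ocol by blast+
    then show ?thesis using col(4) unfolding PC_def by simp
  next
    case row
    then have "snd (ocell p) = j" "snd (ocell q) = j" using orow by blast+
    then show ?thesis using row(4) unfolding PR_def by simp
  qed
qed

lemma cell_equiv:
  assumes p: "p \<in> {1..L}" and q: "q \<in> {1..L}" and pq: "p \<noteq> q"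
    and same: "ocell p = ocell q" and inC: "ocell p \<in> C"
  shows "PC c (fst (ocell p)) p q = PR r pi (snd (ocell p)) p q"
proof -
  obtain X Y where XY: "ocell p = (X, Y)" by fastforce
  have R: "X \<in> {1..m}" "Y \<in> {1..n}" "M X Y \<noteq> 0" using C_range[OF inC] XY by auto
  have cs: "c X = 1 \<or> c X = -1" and rs: "r Y = 1 \<or> r Y = -1" and MXY: "M X Y = c X * r Y"
    using ps R unfolding pmm_signs_def by auto
  have pp: "pi p \<in> {1..L}" "pi q \<in> {1..L}" using p q bij_betwE[OF pi_bij] by auto
  have pne: "pi p \<noteq> pi q" using pi_inj p q pq by blast
  have m1: "(M X Y = 1 \<longrightarrow> pi p < pi q) \<and> (M X Y = -1 \<longrightarrow> pi q < pi p)" if "p < q"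
    using gcell_mono[OF go p pp(1) q pp(2) same that] XY by simp
  have m2: "(M X Y = 1 \<longrightarrow> pi q < pi p) \<and> (M X Y = -1 \<longrightarrow> pi p < pi q)" if "q < p"
    using gcell_mono[OF go q pp(2) p pp(1) same[symmetric] that] XY same by simp
  have "p < q \<or> q < p" using pq by linarith
  then show ?thesis unfolding PC_def PR_def XY fst_conv snd_conv
    using cs rs MXY m1 m2 pne by auto
qed

lemma key:
  assumes i: "1 \<le> i" "i + l \<le> L"
  shows "PC c (fst (lab (ct i))) (sg (i + l)) (sg i) \<and> PR r pi (snd (lab (ct i))) (sg (i + l)) (sg i)"
proof -
  define P where "P = lab (ct i)"
  have iL: "i \<in> {1..L}" "i + l \<in> {1..L}" using i by auto
  have oa: "ocell (sg (i + l)) = P" using oc[OF iL(2)] ct_per[OF i(1)] P_def by simp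
  have ob: "ocell (sg i) = P" using oc[OF iL(1)] P_def by simp
  have PC': "P \<in> C" unfolding P_def by (rule lab_C[OF ct_range])
  have ne: "sg (i + l) \<noteq> sg i" using sg_inj[OF iL(2) iL(1)] l4 by auto
  have pa: "sg (i + l) \<in> {1..L}" using pts[OF iL(2)] by blast
  have pb: "sg i \<in> {1..L}" using pts[OF iL(1)] by blast
  have eq: "PC c (fst P) (sg (i + l)) (sg i) = PR r pi (snd P) (sg (i + l)) (sg i)"
    using cell_equiv[OF pa pb ne] oa ob PC' by simp
  have one: "PC c (fst P) (sg (i + l)) (sg i) \<or> PR r pi (snd P) (sg (i + l)) (sg i)"
  proof (cases "i = 1")
    case True
    have "orient_arrow m n c r pi vo ho (sg (i + l)) (sg i)" using c4 True by (simp add: add.commute)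
    then show ?thesis using arrow oa ob by fastforce
  next
    case False
    then have i2: "i \<ge> 2" using i by simp
    define Q where "Q = lab (ct (i - 1))"
    have iL3: "i - 1 \<in> {1..L}" using i2 i by auto
    have oq: "ocell (sg (i - 1)) = Q" using oc[OF iL3] Q_def by simp
    have "lab (ct (i - 1)) \<noteq> lab (ct (i - 1 + 1))" using cell_ne[of "i - 1"] i2 by linarith
    moreover have "i - 1 + 1 = i" using i2 by simp
    ultimately have "lab (ct (i - 1)) \<noteq> lab (ct i)" by simp
    then have PQ: "P \<noteq> Q" using i2 P_def Q_def by simp
    have "l + 1 < i + l \<and> i + l \<le> L" using i2 i by simp
    then have "orient_arrow m n c r pi vo ho (sg (i + l)) (sg (i + l - l - 1))" using c3 by blast
    moreover have "i + l - l - 1 = i - 1" by simp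
    ultimately have a1: "orient_arrow m n c r pi vo ho (sg (i + l)) (sg (i - 1))" by simp
    have a2: "orient_arrow m n c r pi vo ho (sg (i - 1)) (sg i)" using c2 i2 i by simp
    have A1: "(fst P = fst Q \<and> PC c (fst P) (sg (i + l)) (sg (i - 1))) \<or>
              (snd P = snd Q \<and> PR r pi (snd P) (sg (i + l)) (sg (i - 1)))"
      using arrow[OF a1] oa oq by simp
    have A2: "(fst Q = fst P \<and> PC c (fst Q) (sg (i - 1)) (sg i)) \<or>
              (snd Q = snd P \<and> PR r pi (snd Q) (sg (i - 1)) (sg i))"
      using arrow[OF a2] ob oq by simp
    have nb: "\<not> (fst P = fst Q \<and> snd P = snd Q)" using PQ by (simp add: prod_eq_iff)
    show ?thesis
    proof (cases "fst P = fst Q")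
      case True
      then have "PC c (fst P) (sg (i + l)) (sg (i - 1))" "PC c (fst P) (sg (i - 1)) (sg i)"
        using A1 A2 nb by auto
      then show ?thesis using PC_trans by blast
    next
      case False
      then have "PR r pi (snd P) (sg (i + l)) (sg (i - 1))" "PR r pi (snd P) (sg (i - 1)) (sg i)"
        using A1 A2 by auto
      then show ?thesis using PR_trans by blast
    qed
  qed
  show ?thesis using one eq P_def by auto
qed

lemma chain:
  assumes "1 \<le> i" "i + Suc j * l \<le> L"
  shows "PC c (fst (lab (ct i))) (sg (i + Suc j * l)) (sg i) \<and>
         PR r pi (snd (lab (ct i))) (sg (i + Suc j * l)) (sg i)"
  using assms(2)
proof (induction j)
  case 0 then show ?case using key[OF assms(1)] by simp
next
  case (Suc j)
  define i' where "i' = i + Suc j * l"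
  have i'1: "1 \<le> i'" "i' + l \<le> L" using Suc.prems assms(1) unfolding i'_def by (auto simp: algebra_simps)
  have ct': "ct i' = ct i" unfolding i'_def using ct_perj[OF assms(1)] by blast
  have IH: "PC c (fst (lab (ct i))) (sg i') (sg i) \<and> PR r pi (snd (lab (ct i))) (sg i') (sg i)"
    using Suc.IH i'1 unfolding i'_def by simp
  have K: "PC c (fst (lab (ct i))) (sg (i' + l)) (sg i') \<and> PR r pi (snd (lab (ct i))) (sg (i' + l)) (sg i')"
    using key[OF i'1] ct' by simp
  have e: "i + Suc (Suc j) * l = i' + l" unfolding i'_def by simp
  show ?case unfolding e using IH K PC_trans PR_trans by blast
qed


definition Breaks where
  "Breaks = {i \<in> {1..L}. i + l \<le> L \<and> ncell (sg i) \<noteq> ncell (sg (i + l))}"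
definition SC where
  "SC s = {i \<in> {1..L}. i + l \<le> L \<and> sep (vv s) (sg i) (sg (i + l))}"
definition SR where
  "SR s = {i \<in> {1..L}. i + l \<le> L \<and> sep (hh s) (pi (sg i)) (pi (sg (i + l)))}"

lemma class_order:
  assumes i: "1 \<le> i" "i < i'" "ct i = ct i'" "i' + l \<le> L"
  shows "(PC c (fst (lab (ct i))) (sg (i + l)) (sg i) \<and> PC c (fst (lab (ct i))) (sg (i' + l)) (sg i') \<and>
          (sg i' = sg (i + l) \<or> PC c (fst (lab (ct i))) (sg i') (sg (i + l)))) \<and>
         (PR r pi (snd (lab (ct i))) (sg (i + l)) (sg i) \<and> PR r pi (snd (lab (ct i))) (sg (i' + l)) (sg i') \<and>
          (sg i' = sg (i + l) \<or> PR r pi (snd (lab (ct i))) (sg i') (sg (i + l))))"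
proof -
  obtain j where j: "j \<ge> 1" "i' = i + j * l" using ct_eq_class[OF i(1-3)] by blast
  have k1: "PC c (fst (lab (ct i))) (sg (i + l)) (sg i) \<and> PR r pi (snd (lab (ct i))) (sg (i + l)) (sg i)"
    using key[OF i(1)] i j by simp
  have k2: "PC c (fst (lab (ct i))) (sg (i' + l)) (sg i') \<and> PR r pi (snd (lab (ct i))) (sg (i' + l)) (sg i')"
    using key[of i'] i by simp
  have k3: "sg i' = sg (i + l) \<or> (PC c (fst (lab (ct i))) (sg i') (sg (i + l)) \<and> PR r pi (snd (lab (ct i))) (sg i') (sg (i + l)))"
  proof (cases "j = 1")
    case True then show ?thesis using j by simp
  next
    case False
    then obtain j' where j': "j = Suc (Suc j')" using j(1) by (cases j; cases "j - 1") auto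
    have e: "i' = (i + l) + Suc j' * l" using j j' by simp
    have "1 \<le> i + l" using i by simp
    moreover have "(i + l) + Suc j' * l \<le> L" using e i by simp
    ultimately have "PC c (fst (lab (ct (i + l)))) (sg i') (sg (i + l)) \<and> PR r pi (snd (lab (ct (i + l)))) (sg i') (sg (i + l))"
      using chain[of "i + l" j'] e by simp
    then show ?thesis using ct_per[OF i(1)] by simp
  qed
  show ?thesis using k1 k2 k3 by blast
qed

lemma SC_card: "card (SC s) \<le> l"
proof -
  have inj: "inj_on ct (SC s)"
  proof (rule inj_onI)
    fix i i' assume A: "i \<in> SC s" "i' \<in> SC s" "ct i = ct i'"
    show "i = i'"
    proof (rule ccontr)
      assume "i \<noteq> i'"
      have gen: False if "i1 \<in> SC s" "i2 \<in> SC s" "ct i1 = ct i2" "i1 < i2" for i1 i2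
      proof -
        have h: "1 \<le> i1" "i2 + l \<le> L" using that unfolding SC_def by auto
        have O: "PC c (fst (lab (ct i1))) (sg (i1 + l)) (sg i1) \<and> PC c (fst (lab (ct i1))) (sg (i2 + l)) (sg i2) \<and>
          (sg i2 = sg (i1 + l) \<or> PC c (fst (lab (ct i1))) (sg i2) (sg (i1 + l)))"
          using class_order[OF h(1) that(4) that(3) h(2)] by blast
        have s1: "sep (vv s) (sg i1) (sg (i1 + l))" "sep (vv s) (sg i2) (sg (i2 + l))"
          using that unfolding SC_def by auto
        have "(sg (i1 + l) < sg i1 \<and> sg (i2 + l) < sg i2 \<and> sg i2 \<le> sg (i1 + l)) \<or>
              (sg i1 < sg (i1 + l) \<and> sg i2 < sg (i2 + l) \<and> sg (i1 + l) \<le> sg i2)"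
          using O unfolding PC_def by (auto split: if_splits)
        then show False using sep_contra s1 by blast
      qed
      show False
      proof (cases "i < i'")
        case True then show False using gen[OF A(1,2,3)] by blast
      next
        case False then have "i' < i" using \<open>i \<noteq> i'\<close> by simp
        then show False using gen[OF A(2,1) A(3)[symmetric]] by blast
      qed
    qed
  qed
  have "ct ` SC s \<subseteq> {1..l}" using ct_range by auto
  then have "card (SC s) \<le> card {1..l}" using card_inj_on_le[OF inj] by blast
  then show ?thesis by simp
qed

lemma SR_card: "card (SR s) \<le> l"
proof -
  have inj: "inj_on ct (SR s)"
  proof (rule inj_onI)
    fix i i' assume A: "i \<in> SR s" "i' \<in> SR s" "ct i = ct i'"
    show "i = i'"
    proof (rule ccontr)
      assume "i \<noteq> i'"
      have gen: False if "i1 \<in> SR s" "i2 \<in> SR s" "ct i1 = ct i2" "i1 < i2" for i1 i2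
      proof -
        have h: "1 \<le> i1" "i2 + l \<le> L" using that unfolding SR_def by auto
        have O: "PR r pi (snd (lab (ct i1))) (sg (i1 + l)) (sg i1) \<and> PR r pi (snd (lab (ct i1))) (sg (i2 + l)) (sg i2) \<and>
          (sg i2 = sg (i1 + l) \<or> PR r pi (snd (lab (ct i1))) (sg i2) (sg (i1 + l)))"
          using class_order[OF h(1) that(4) that(3) h(2)] by blast
        have s1: "sep (hh s) (pi (sg i1)) (pi (sg (i1 + l)))" "sep (hh s) (pi (sg i2)) (pi (sg (i2 + l)))"
          using that unfolding SR_def by auto
        have "(pi (sg (i1 + l)) < pi (sg i1) \<and> pi (sg (i2 + l)) < pi (sg i2) \<and> pi (sg i2) \<le> pi (sg (i1 + l))) \<or>
              (pi (sg i1) < pi (sg (i1 + l)) \<and> pi (sg i2) < pi (sg (i2 + l)) \<and> pi (sg (i1 + l)) \<le> pi (sg i2))"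
          using O unfolding PR_def by (auto split: if_splits)
        then show False using sep_contra s1 by blast
      qed
      show False
      proof (cases "i < i'")
        case True then show False using gen[OF A(1,2,3)] by blast
      next
        case False then have "i' < i" using \<open>i \<noteq> i'\<close> by simp
        then show False using gen[OF A(2,1) A(3)[symmetric]] by blast
      qed
    qed
  qed
  have "ct ` SR s \<subseteq> {1..l}" using ct_range by auto
  then have "card (SR s) \<le> card {1..l}" using card_inj_on_le[OF inj] by blast
  then show ?thesis by simp
qed

lemma Breaks_sub: "Breaks \<subseteq> (\<Union>s\<in>{1..m}. SC s) \<union> (\<Union>s\<in>{1..n}. SR s)"
proof
  fix i assume "i \<in> Breaks"
  then have i: "i \<in> {1..L}" "i + l \<le> L" "ncell (sg i) \<noteq> ncell (sg (i + l))" unfolding Breaks_def by auto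
  have iL: "i + l \<in> {1..L}" using i by auto
  define a where "a = sg i"
  define b where "b = sg (i + l)"
  have a: "a \<in> {1..L}" "pi a \<in> {1..L}" using pts[OF i(1)] a_def by auto
  have b: "b \<in> {1..L}" "pi b \<in> {1..L}" using pts[OF iL] b_def by auto
  have "idx vv a \<noteq> idx vv b \<or> idx hh (pi a) \<noteq> idx hh (pi b)"
    using i(3) unfolding a_def b_def gcell_def by auto
  then consider "idx vv a < idx vv b" | "idx vv b < idx vv a" | "idx hh (pi a) < idx hh (pi b)" | "idx hh (pi b) < idx hh (pi a)"
    by linarith
  then show "i \<in> (\<Union>s\<in>{1..m}. SC s) \<union> (\<Union>s\<in>{1..n}. SR s)"
  proof cases
    case 1
    have "a \<le> vv (idx vv a) \<and> vv (idx vv a) < b"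
      by (rule idx_sep[OF nmono(1,3,4)]) (use a b 1 in auto)
    moreover have "idx vv a \<in> {1..m}" using idx_props[OF nmono(1,3,4)] a by simp
    ultimately show ?thesis using i unfolding SC_def sep_def a_def b_def by blast
  next
    case 2
    have "b \<le> vv (idx vv b) \<and> vv (idx vv b) < a"
      by (rule idx_sep[OF nmono(1,3,4)]) (use a b 2 in auto)
    moreover have "idx vv b \<in> {1..m}" using idx_props[OF nmono(1,3,4)] b by simp
    ultimately show ?thesis using i unfolding SC_def sep_def a_def b_def by blast
  next
    case 3
    have "pi a \<le> hh (idx hh (pi a)) \<and> hh (idx hh (pi a)) < pi b"
      by (rule idx_sep[OF nmono(2,5,6)]) (use a b 3 in auto)
    moreover have "idx hh (pi a) \<in> {1..n}" using idx_props[OF nmono(2,5,6)] a by simp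
    ultimately show ?thesis using i unfolding SR_def sep_def a_def b_def by blast
  next
    case 4
    have "pi b \<le> hh (idx hh (pi b)) \<and> hh (idx hh (pi b)) < pi a"
      by (rule idx_sep[OF nmono(2,5,6)]) (use a b 4 in auto)
    moreover have "idx hh (pi b) \<in> {1..n}" using idx_props[OF nmono(2,5,6)] b by simp
    ultimately show ?thesis using i unfolding SR_def sep_def a_def b_def by blast
  qed
qed

lemma Breaks_card: "card Breaks \<le> (m + n) * l"
proof -
  have fin: "finite (SC s)" "finite (SR s)" for s unfolding SC_def SR_def by auto
  have "finite ((\<Union>s\<in>{1..m}. SC s) \<union> (\<Union>s\<in>{1..n}. SR s))" using fin by auto
  then have "card Breaks \<le> card ((\<Union>s\<in>{1..m}. SC s) \<union> (\<Union>s\<in>{1..n}. SR s))"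
    using card_mono Breaks_sub by blast
  also have "\<dots> \<le> card (\<Union>s\<in>{1..m}. SC s) + card (\<Union>s\<in>{1..n}. SR s)" by (rule card_Un_le)
  also have "card (\<Union>s\<in>{1..m}. SC s) \<le> (\<Sum>s\<in>{1..m}. card (SC s))" by (rule card_UN_le) simp
  also have "\<dots> \<le> (\<Sum>s\<in>{1..m}. l)" by (rule sum_mono) (rule SC_card)
  also have "card (\<Union>s\<in>{1..n}. SR s) \<le> (\<Sum>s\<in>{1..n}. card (SR s))" by (rule card_UN_le) simp
  also have "\<dots> \<le> (\<Sum>s\<in>{1..n}. l)" by (rule sum_mono) (rule SR_card)
  finally show ?thesis by (simp add: algebra_simps)
qed

end



context coilctx begin

lemma shared:
  assumes "1 \<le> i" "i + 1 \<le> L"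
  shows "lab (ct i) \<noteq> lab (ct (i + 1)) \<and>
    ((fst (lab (ct i)) = fst (lab (ct (i + 1))) \<and> PC c (fst (lab (ct i))) (sg i) (sg (i + 1))) \<or>
     (snd (lab (ct i)) = snd (lab (ct (i + 1))) \<and> PR r pi (snd (lab (ct i))) (sg i) (sg (i + 1))))"
proof -
  have "1 < i + 1 \<and> i + 1 \<le> L" using assms by simp
  then have "orient_arrow m n c r pi vo ho (sg (i + 1 - 1)) (sg (i + 1))" using c2 by blast
  then have a: "orient_arrow m n c r pi vo ho (sg i) (sg (i + 1))" by simp
  have iL: "i \<in> {1..L}" "i + 1 \<in> {1..L}" using assms by auto
  show ?thesis using arrow[OF a] oc[OF iL(1)] oc[OF iL(2)] cell_ne[OF assms(1)] by simp
qed

lemma interleave: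
  assumes i: "1 \<le> i" "i + l + 1 \<le> L"
  shows "(fst (lab (ct i)) = fst (lab (ct (i + 1))) \<and>
          PC c (fst (lab (ct i))) (sg (i + l)) (sg (i + l + 1)) \<and> PC c (fst (lab (ct i))) (sg (i + l + 1)) (sg i)) \<or>
         (snd (lab (ct i)) = snd (lab (ct (i + 1))) \<and>
          PR r pi (snd (lab (ct i))) (sg (i + l)) (sg (i + l + 1)) \<and> PR r pi (snd (lab (ct i))) (sg (i + l + 1)) (sg i))"
proof -
  define P where "P = lab (ct i)"
  define Q where "Q = lab (ct (i + 1))"
  have PQ: "P \<noteq> Q" using cell_ne[OF i(1)] P_def Q_def by simp
  have iL: "i \<in> {1..L}" "i + l \<in> {1..L}" "i + l + 1 \<in> {1..L}" using i by auto
  have o1: "ocell (sg (i + l)) = P" using oc[OF iL(2)] ct_per[OF i(1)] P_def by simp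
  have "ct (i + 1 + l) = ct (i + 1)" by (rule ct_per) simp
  then have o2: "ocell (sg (i + l + 1)) = Q" using oc[OF iL(3)] Q_def by (simp add: add.commute add.left_commute)
  have o3: "ocell (sg i) = P" using oc[OF iL(1)] P_def by simp
  have "1 < i + l + 1 \<and> i + l + 1 \<le> L" using i by simp
  then have "orient_arrow m n c r pi vo ho (sg (i + l + 1 - 1)) (sg (i + l + 1))" using c2 by blast
  then have a1: "orient_arrow m n c r pi vo ho (sg (i + l)) (sg (i + l + 1))" by simp
  have "l + 1 < i + l + 1 \<and> i + l + 1 \<le> L" using i by simp
  then have "orient_arrow m n c r pi vo ho (sg (i + l + 1)) (sg (i + l + 1 - l - 1))" using c3 by blast
  then have a2: "orient_arrow m n c r pi vo ho (sg (i + l + 1)) (sg i)" by simp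
  have A1: "(fst P = fst Q \<and> PC c (fst P) (sg (i + l)) (sg (i + l + 1))) \<or>
            (snd P = snd Q \<and> PR r pi (snd P) (sg (i + l)) (sg (i + l + 1)))"
    using arrow[OF a1] o1 o2 by simp
  have A2: "(fst Q = fst P \<and> PC c (fst Q) (sg (i + l + 1)) (sg i)) \<or>
            (snd Q = snd P \<and> PR r pi (snd Q) (sg (i + l + 1)) (sg i))"
    using arrow[OF a2] o2 o3 by simp
  have nb: "\<not> (fst P = fst Q \<and> snd P = snd Q)" using PQ by (simp add: prod_eq_iff)
  have "(fst P = fst Q \<and> PC c (fst P) (sg (i + l)) (sg (i + l + 1)) \<and> PC c (fst P) (sg (i + l + 1)) (sg i)) \<or>
         (snd P = snd Q \<and> PR r pi (snd P) (sg (i + l)) (sg (i + l + 1)) \<and> PR r pi (snd P) (sg (i + l + 1)) (sg i))"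
  proof (cases "fst P = fst Q")
    case True
    then have "snd P \<noteq> snd Q" using nb by blast
    then show ?thesis using A1 A2 True by force
  next
    case False
    then show ?thesis using A1 A2 by force
  qed
  then show ?thesis unfolding P_def Q_def .
qed

lemma alternation:
  assumes "1 \<le> i" "i + 2 \<le> L"
  shows "(fst (lab (ct i)) = fst (lab (ct (i + 1)))) = (\<not> fst (lab (ct (i + 1))) = fst (lab (ct (i + 2))))"
proof -
  define P0 where "P0 = lab (ct i)"
  define P1 where "P1 = lab (ct (i + 1))"
  define P2 where "P2 = lab (ct (i + 2))"
  have s1: "P0 \<noteq> P1 \<and> (fst P0 = fst P1 \<or> snd P0 = snd P1)"
    using shared[of i] assms unfolding P0_def P1_def by auto
  have s2: "P1 \<noteq> P2 \<and> (fst P1 = fst P2 \<or> snd P1 = snd P2)"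
    using shared[of "i + 1"] assms unfolding P1_def P2_def by (auto simp: add.assoc)
  have ne02: "P0 \<noteq> P2" using cell_ne2[OF assms(1)] unfolding P0_def P2_def .
  have inC: "P0 \<in> C" "P1 \<in> C" "P2 \<in> C" unfolding P0_def P1_def P2_def by (rule lab_C[OF ct_range])+
  have nc: "\<not> (fst P0 = fst P1 \<and> fst P1 = fst P2)"
    using cycle_col2[OF cyc inC] s1 s2 ne02 by blast
  have nr: "\<not> (snd P0 = snd P1 \<and> snd P1 = snd P2)"
    using cycle_row2[OF cyc inC] s1 s2 ne02 by blast
  have b0: "\<not> (fst P0 = fst P1 \<and> snd P0 = snd P1)" using s1 by (simp add: prod_eq_iff)
  have b1: "\<not> (fst P1 = fst P2 \<and> snd P1 = snd P2)" using s2 by (simp add: prod_eq_iff)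
  show ?thesis unfolding P0_def[symmetric] P1_def[symmetric] P2_def[symmetric]
    using s1 s2 nc nr b0 b1 by blast
qed

lemma ncell_mono_iff:
  assumes x: "x \<in> {1..L}" and y: "y \<in> {1..L}" and xy: "x \<noteq> y" and same: "ncell x = ncell y"
  shows "(M (fst (ncell x)) (snd (ncell x)) = 1 \<longrightarrow> (x < y \<longleftrightarrow> pi x < pi y)) \<and>
         (M (fst (ncell x)) (snd (ncell x)) = -1 \<longrightarrow> (x < y \<longleftrightarrow> pi y < pi x)) \<and>
         (M (fst (ncell x)) (snd (ncell x)) = 1 \<or> M (fst (ncell x)) (snd (ncell x)) = -1)"
proof -
  have px: "pi x \<in> {1..L}" and py: "pi y \<in> {1..L}" using x y bij_betwE[OF pi_bij] by auto
  have pne: "pi x \<noteq> pi y" using pi_inj x y xy by blast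
  have rng: "ncell x \<in> {1..m} \<times> {1..n}" using gcell_in[OF gn x px] by blast
  have M3: "M (fst (ncell x)) (snd (ncell x)) \<in> {-1, 0, 1}"
    using gm rng unfolding gridding_matrix_def by (auto simp: mem_Times_iff)
  have "x < y \<or> y < x" using xy by linarith
  then show ?thesis
  proof
    assume "x < y"
    then show ?thesis using gcell_mono[OF gn x px y py same] M3 pne by auto
  next
    assume "y < x"
    then show ?thesis using gcell_mono[OF gn y py x px same[symmetric]] same M3 pne by auto
  qed
qed

lemma ncell_ok: "j \<in> {1..L} \<Longrightarrow> edge_ok m n M (ncell (sg j))"
proof -
  assume j: "j \<in> {1..L}"
  have p: "sg j \<in> {1..L}" "pi (sg j) \<in> {1..L}" using pts[OF j] by auto
  have g: "ncell (sg j) \<in> {1..m} \<times> {1..n}" "in_cell pi vv hh (ncell (sg j)) (sg j)"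
    using gcell_in[OF gn p] by auto
  obtain i0 j0 where ij: "ncell (sg j) = (i0, j0)" by fastforce
  have "M i0 j0 = 0 \<longrightarrow> (\<forall>p\<in>{1..L}. \<not> in_cell pi vv hh (i0, j0) p)"
    using gn g(1) ij unfolding is_gridding_def by auto
  then have "M i0 j0 \<noteq> 0" using g ij p by auto
  then show ?thesis using g ij unfolding edge_ok_def by simp
qed


lemma nobreak_eq:
  assumes "i \<in> {1..L}" "i + l \<le> L" "i \<notin> Breaks"
  shows "ncell (sg (i + l)) = ncell (sg i)"
  using assms unfolding Breaks_def by auto

lemma step_cells:
  assumes i: "1 \<le> i" "i + l + 1 \<le> L" and nb: "ncell (sg (i + l)) = ncell (sg i)"
  shows "ncell (sg i) \<noteq> ncell (sg (i + l + 1)) \<and>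
    (if fst (lab (ct i)) = fst (lab (ct (i + 1))) then fst (ncell (sg i)) = fst (ncell (sg (i + l + 1)))
     else snd (ncell (sg i)) = snd (ncell (sg (i + l + 1))))"
proof -
  define A where "A = sg (i + l)"
  define B where "B = sg (i + l + 1)"
  define A' where "A' = sg i"
  define P where "P = lab (ct i)"
  define Q where "Q = lab (ct (i + 1))"
  have PQ: "P \<noteq> Q" using cell_ne[OF i(1)] P_def Q_def by simp
  have iL: "i \<in> {1..L}" "i + l \<in> {1..L}" "i + l + 1 \<in> {1..L}" using i by auto
  have pA: "A \<in> {1..L}" "pi A \<in> {1..L}" using pts[OF iL(2)] A_def by auto
  have pB: "B \<in> {1..L}" "pi B \<in> {1..L}" using pts[OF iL(3)] B_def by auto
  have pA': "A' \<in> {1..L}" "pi A' \<in> {1..L}" using pts[OF iL(1)] A'_def by auto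
  have AB: "A \<noteq> B" using sg_inj[OF iL(2) iL(3)] A_def B_def by auto
  have BA': "B \<noteq> A'" using sg_inj[OF iL(3) iL(1)] B_def A'_def by auto
  have AA': "A \<noteq> A'" using sg_inj[OF iL(2) iL(1)] A_def A'_def l4 by auto
  have o1: "ocell A = P" using oc[OF iL(2)] ct_per[OF i(1)] P_def A_def by simp
  have "ct (i + 1 + l) = ct (i + 1)" by (rule ct_per) simp
  then have o2: "ocell B = Q" using oc[OF iL(3)] Q_def B_def by (simp add: add.commute add.left_commute)
  have o3: "ocell A' = P" using oc[OF iL(1)] P_def A'_def by simp
  have IL: "(fst P = fst Q \<and> PC c (fst P) A B \<and> PC c (fst P) B A') \<or>
         (snd P = snd Q \<and> PR r pi (snd P) A B \<and> PR r pi (snd P) B A')"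
    using interleave[OF i] unfolding A_def B_def A'_def P_def Q_def .
  have nAA: "ncell A = ncell A'" using nb A_def A'_def by simp
  have vL: "A \<le> vv m" "B \<le> vv m" "A' \<le> vv m" using pA pB pA' nmono by auto
  have hL: "pi A \<le> hh n" "pi B \<le> hh n" "pi A' \<le> hh n" using pA pB pA' nmono by auto
  have voL: "A \<le> vo m" "B \<le> vo m" "A' \<le> vo m" using pA pB pA' go unfolding is_gridding_def by auto
  have hoL: "pi A \<le> ho n" "pi B \<le> ho n" "pi A' \<le> ho n" using pA pB pA' go unfolding is_gridding_def by auto
  have ne: "ncell A' \<noteq> ncell B"
  proof
    assume eqB: "ncell A' = ncell B"
    have mAB: "(M (fst (ncell A)) (snd (ncell A)) = 1 \<longrightarrow> (A < B \<longleftrightarrow> pi A < pi B)) \<and>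
         (M (fst (ncell A)) (snd (ncell A)) = -1 \<longrightarrow> (A < B \<longleftrightarrow> pi B < pi A)) \<and>
         (M (fst (ncell A)) (snd (ncell A)) = 1 \<or> M (fst (ncell A)) (snd (ncell A)) = -1)"
      using ncell_mono_iff[OF pA(1) pB(1) AB] nAA eqB by simp
    have mBA: "(M (fst (ncell A)) (snd (ncell A)) = 1 \<longrightarrow> (B < A' \<longleftrightarrow> pi B < pi A')) \<and>
         (M (fst (ncell A)) (snd (ncell A)) = -1 \<longrightarrow> (B < A' \<longleftrightarrow> pi A' < pi B))"
      using ncell_mono_iff[OF pB(1) pA'(1) BA'] nAA eqB by simp
    have pAB: "pi A \<noteq> pi B" "pi B \<noteq> pi A'" using pi_inj pA pB pA' AB BA' by blast+
    from IL show False
    proof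
      assume H: "fst P = fst Q \<and> PC c (fst P) A B \<and> PC c (fst P) B A'"
      then have "snd P \<noteq> snd Q" using PQ by (simp add: prod_eq_iff)
      then have "idx ho (pi A) = idx ho (pi A')" "idx ho (pi A) \<noteq> idx ho (pi B)"
        using o1 o2 o3 unfolding gcell_def by auto
      then have side: "(pi A < pi B) = (pi A' < pi B)" using idx_side hoL by blast
      have ord: "(A < B \<and> B < A') \<or> (A' < B \<and> B < A)" using H unfolding PC_def by (auto split: if_splits)
      show False using ord side mAB mBA pAB by auto
    next
      assume H: "snd P = snd Q \<and> PR r pi (snd P) A B \<and> PR r pi (snd P) B A'"
      then have "fst P \<noteq> fst Q" using PQ by (simp add: prod_eq_iff)
      then have "idx vo A = idx vo A'" "idx vo A \<noteq> idx vo B"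
        using o1 o2 o3 unfolding gcell_def by auto
      then have side: "(A < B) = (A' < B)" using idx_side voL by blast
      have ord: "(pi A < pi B \<and> pi B < pi A') \<or> (pi A' < pi B \<and> pi B < pi A)" using H unfolding PR_def by (auto split: if_splits)
      show False using ord side mAB mBA pAB by auto
    qed
  qed
  have sh: "if fst P = fst Q then fst (ncell A') = fst (ncell B) else snd (ncell A') = snd (ncell B)"
  proof (cases "fst P = fst Q")
    case True
    then have "snd P \<noteq> snd Q" using PQ by (simp add: prod_eq_iff)
    then have H: "PC c (fst P) A B \<and> PC c (fst P) B A'" using IL True by auto
    have ord: "(A < B \<and> B < A') \<or> (A' < B \<and> B < A)" using H unfolding PC_def by (auto split: if_splits)
    have "idx vv A \<le> idx vv B \<and> idx vv B \<le> idx vv A' \<or> idx vv A' \<le> idx vv B \<and> idx vv B \<le> idx vv A"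
      using ord idx_mono[of _ _ vv m] vL by (meson less_imp_le)
    moreover have "idx vv A = idx vv A'" using nAA unfolding gcell_def by simp
    ultimately have "idx vv A' = idx vv B" by auto
    then show ?thesis using True unfolding gcell_def by simp
  next
    case False
    then have H: "PR r pi (snd P) A B \<and> PR r pi (snd P) B A'" using IL by auto
    have ord: "(pi A < pi B \<and> pi B < pi A') \<or> (pi A' < pi B \<and> pi B < pi A)" using H unfolding PR_def by (auto split: if_splits)
    have "idx hh (pi A) \<le> idx hh (pi B) \<and> idx hh (pi B) \<le> idx hh (pi A') \<or> idx hh (pi A') \<le> idx hh (pi B) \<and> idx hh (pi B) \<le> idx hh (pi A)"
      using ord idx_mono[of _ _ hh n] hL by (meson less_imp_le)
    moreover have "idx hh (pi A) = idx hh (pi A')" using nAA unfolding gcell_def by simp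
    ultimately have "idx hh (pi A') = idx hh (pi B)" by auto
    then show ?thesis using False unfolding gcell_def by simp
  qed
  show ?thesis using ne sh unfolding A'_def B_def P_def Q_def by simp
qed


lemma window:
  assumes a: "1 \<le> a" "a + 2 * l \<le> L"
    and nbr: "\<And>i. a \<le> i \<Longrightarrow> i + l \<le> a + 2 * l \<Longrightarrow> i \<notin> Breaks"
    and j: "a \<le> j" "j \<le> a + 2 * l"
  shows "ncell (sg j) \<in> C"
proof -
  have l0: "0 < l" using l4 by simp
  have nbe: "ncell (sg (i + l)) = ncell (sg i)" if "a \<le> i" "i + l \<le> a + 2 * l" for i
    using nobreak_eq[of i] nbr[OF that] that a by auto
  define E where "E u = ncell (sg (a + u mod l))" for u
  have Eper: "E (u + l) = E u" for u unfolding E_def by simp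
  have win: "ncell (sg (a + u)) = E u" if "u \<le> 2 * l" for u
  proof -
    have "u < l \<or> (l \<le> u \<and> u < 2 * l) \<or> u = 2 * l" using that by linarith
    then consider "u < l" | "l \<le> u" "u < 2 * l" | "u = 2 * l" by blast
    then show ?thesis
    proof cases
      case 1 then show ?thesis unfolding E_def by simp
    next
      case 2
      then have "u mod l = u - l" by (simp add: le_mod_geq)
      moreover have "ncell (sg ((a + (u - l)) + l)) = ncell (sg (a + (u - l)))"
        by (rule nbe) (use 2 in auto)
      moreover have "(a + (u - l)) + l = a + u" using 2 by simp
      ultimately show ?thesis unfolding E_def by simp
    next
      case 3
      have e1: "ncell (sg ((a + l) + l)) = ncell (sg (a + l))" by (rule nbe) auto
      have e2: "ncell (sg (a + l)) = ncell (sg a)" using nbe[of a] by simp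
      have "a + u = (a + l) + l" using 3 by simp
      then have "ncell (sg (a + u)) = ncell (sg a)" using e1 e2 by (simp add: add.assoc)
      then show ?thesis using 3 unfolding E_def by simp
    qed
  qed
  define sh where "sh u = (fst (lab (ct (a + u))) = fst (lab (ct (a + u + 1))))" for u
  have shper: "sh (u + l) = sh u" for u
  proof -
    have "ct (a + u + l) = ct (a + u)" by (rule ct_per) (use a in simp)
    moreover have "ct (a + u + 1 + l) = ct (a + u + 1)" by (rule ct_per) simp
    ultimately show ?thesis unfolding sh_def by (simp add: algebra_simps)
  qed
  have ok_base: "E u \<noteq> E (Suc u) \<and> (if sh u then fst (E u) = fst (E (Suc u)) else snd (E u) = snd (E (Suc u)))
         \<and> (sh u = (\<not> sh (Suc u)))" if u: "u < l" for u
  proof -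
    have i1: "1 \<le> a + u" "a + u + l + 1 \<le> L" using a u by auto
    have nb: "ncell (sg (a + u + l)) = ncell (sg (a + u))" using nbe[of "a + u"] u by simp
    have S: "ncell (sg (a + u)) \<noteq> ncell (sg (a + u + l + 1)) \<and>
      (if fst (lab (ct (a + u))) = fst (lab (ct (a + u + 1))) then fst (ncell (sg (a + u))) = fst (ncell (sg (a + u + l + 1)))
       else snd (ncell (sg (a + u))) = snd (ncell (sg (a + u + l + 1))))"
      by (rule step_cells[OF i1 nb])
    have Eu: "ncell (sg (a + u)) = E u" using win u by simp
    have "ncell (sg (a + (u + l + 1))) = E (u + l + 1)" by (rule win) (use u in simp)
    moreover have "E (u + l + 1) = E (Suc u)" using Eper[of "Suc u"] by simp
    ultimately have Eu1: "ncell (sg (a + u + l + 1)) = E (Suc u)" by (simp add: add.assoc)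
    have alt: "(fst (lab (ct (a + u))) = fst (lab (ct (a + u + 1)))) = (\<not> fst (lab (ct (a + u + 1))) = fst (lab (ct (a + u + 2))))"
      using alternation[of "a + u"] a u by simp
    have "sh (Suc u) = (fst (lab (ct (a + u + 1))) = fst (lab (ct (a + u + 2))))"
      unfolding sh_def by (simp add: add.assoc)
    moreover have "E u \<noteq> E (Suc u) \<and>
      (if fst (lab (ct (a + u))) = fst (lab (ct (a + u + 1))) then fst (E u) = fst (E (Suc u))
       else snd (E u) = snd (E (Suc u)))" using S unfolding Eu Eu1 .
    ultimately show ?thesis using alt unfolding sh_def by simp
  qed
  have ok: "E u \<noteq> E (Suc u) \<and> (if sh u then fst (E u) = fst (E (Suc u)) else snd (E u) = snd (E (Suc u)))
         \<and> (sh u = (\<not> sh (Suc u)))" for u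
  proof -
    have m1: "E u = E (u mod l)" by (rule per_mod[of E l, OF Eper])
    have "Suc u mod l = Suc (u mod l) mod l" by (rule mod_suc_cong) simp
    then have m2: "E (Suc u) = E (Suc (u mod l))" by (rule per_modeq[of E l, OF Eper])
    have m3: "sh u = sh (u mod l)" by (rule per_mod[of sh l, OF shper])
    have "Suc u mod l = Suc (u mod l) mod l" by (rule mod_suc_cong) simp
    then have m4: "sh (Suc u) = sh (Suc (u mod l))" by (rule per_modeq[of sh l, OF shper])
    show ?thesis using ok_base[of "u mod l"] l0 m1 m2 m3 m4 by simp
  qed
  have Eok: "edge_ok m n M (E u)" for u
  proof -
    have "E u = ncell (sg (a + u mod l))" unfolding E_def ..
    moreover have "u mod l < l" using l0 by simp
    then have "a + u mod l \<in> {1..L}" using a by simp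
    ultimately show ?thesis using ncell_ok by simp
  qed
  define x where "x u = (if sh u then Inl (fst (E u)) else Inr (snd (E u)))" for u
  have xper: "x (u + l) = x u" for u unfolding x_def using Eper shper by simp
  have xalt: "isl (x u) = (\<not> isl (x (Suc u)))" for u unfolding x_def using ok[of u] by simp
  have xedge: "edgecell (x u) (x (Suc u)) = E (Suc u)" for u
    using ok[of u] unfolding x_def by (cases "sh u") (auto simp: prod_eq_iff)
  have xnb: "x u \<noteq> x (Suc (Suc u))" for u
  proof
    assume eq: "x u = x (Suc (Suc u))"
    have o0: "E u \<noteq> E (Suc u) \<and> (if sh u then fst (E u) = fst (E (Suc u)) else snd (E u) = snd (E (Suc u))) \<and> (sh u = (\<not> sh (Suc u)))" by (rule ok)
    have o1: "E (Suc u) \<noteq> E (Suc (Suc u)) \<and> (if sh (Suc u) then fst (E (Suc u)) = fst (E (Suc (Suc u))) else snd (E (Suc u)) = snd (E (Suc (Suc u)))) \<and> (sh (Suc u) = (\<not> sh (Suc (Suc u))))" by (rule ok)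
    show False
    proof (cases "sh u")
      case True
      then have "fst (E u) = fst (E (Suc (Suc u)))" using eq o0 o1 unfolding x_def by auto
      then show False using True o0 o1 by (auto simp: prod_eq_iff)
    next
      case False
      then have "snd (E u) = snd (E (Suc (Suc u)))" using eq o0 o1 unfolding x_def by auto
      then show False using False o0 o1 by (auto simp: prod_eq_iff)
    qed
  qed
  have xok: "edge_ok m n M (edgecell (x u) (x (Suc u)))" for u using xedge Eok by simp
  have inC: "edgecell (x u) (x (Suc u)) \<in> C" for u
    by (rule walk_in_cycle[OF uc cyc ldef xper xalt xnb xok])
  have "ncell (sg j) = E (j - a)" using win[of "j - a"] j by simp
  also have "\<dots> = E (Suc (j - a + l - 1))" using Eper[of "j - a"] l0 by simp
  also have "\<dots> \<in> C" using inC[of "j - a + l - 1"] xedge by simp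
  finally show ?thesis .
qed


lemma misplaced_bound: "card (misplaced m n M L pi vv hh) \<le> 2 * l + (m + n) * l * (4 * l + 1)"
proof (cases "L \<le> 2 * l")
  case True
  have "misplaced m n M L pi vv hh \<subseteq> {1..L}" unfolding misplaced_def by auto
  then have "card (misplaced m n M L pi vv hh) \<le> card {1..L}" by (rule card_mono[rotated]) simp
  then show ?thesis using True by simp
next
  case False
  define U where "U = (\<Union>b\<in>Breaks. {b - 2 * l .. b + 2 * l})"
  have sub: "misplaced m n M L pi vv hh \<subseteq> sg ` U"
  proof
    fix p assume "p \<in> misplaced m n M L pi vv hh"
    then have p: "p \<in> {1..L}" and nc: "\<not> (\<exists>ij\<in>C. in_cell pi vv hh ij p)"
      unfolding misplaced_def Cdef by auto
    have "p \<in> sg ` {1..L}" using p bij_betw_imp_surj_on[OF sgb] by simp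
    then obtain k where k: "k \<in> {1..L}" "sg k = p" by (auto elim!: imageE)
    have pp: "pi p \<in> {1..L}" using p bij_betwE[OF pi_bij] by auto
    have notC: "ncell (sg k) \<notin> C" using gcell_in[OF gn p pp] nc k(2) by auto
    define a where "a = (if k + 2 * l \<le> L then k else L - 2 * l)"
    have a: "1 \<le> a" "a + 2 * l \<le> L" "a \<le> k" "k \<le> a + 2 * l"
      using False k(1) unfolding a_def by auto
    have "\<exists>i. a \<le> i \<and> i + l \<le> a + 2 * l \<and> i \<in> Breaks"
    proof (rule ccontr)
      assume "\<not> ?thesis"
      then have "ncell (sg k) \<in> C" using window[OF a(1,2) _ a(3,4)] by blast
      then show False using notC by simp
    qed
    then obtain i where i: "a \<le> i" "i + l \<le> a + 2 * l" "i \<in> Breaks" by blast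
    have "k \<in> {i - 2 * l .. i + 2 * l}" using i a by auto
    then have "k \<in> U" unfolding U_def using i(3) by blast
    then show "p \<in> sg ` U" using k(2) by blast
  qed
  have finB: "finite Breaks" unfolding Breaks_def by simp
  have finU: "finite U" unfolding U_def using finB by simp
  have "card (misplaced m n M L pi vv hh) \<le> card (sg ` U)"
    by (rule card_mono[OF finite_imageI[OF finU] sub])
  also have "\<dots> \<le> card U" by (rule card_image_le[OF finU])
  also have "\<dots> \<le> (\<Sum>b\<in>Breaks. card {b - 2 * l .. b + 2 * l})" unfolding U_def by (rule card_UN_le[OF finB])
  also have "\<dots> \<le> (\<Sum>b\<in>Breaks. 4 * l + 1)" by (rule sum_mono) simp
  also have "\<dots> = card Breaks * (4 * l + 1)" by simp
  also have "\<dots> \<le> (m + n) * l * (4 * l + 1)" using Breaks_card by (rule mult_right_mono) simp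
  finally show ?thesis by simp
qed

end

theorem lemma5p6:
  fixes m n :: nat and M :: "nat \<Rightarrow> nat \<Rightarrow> int" and c r :: "nat \<Rightarrow> int"
  assumes "gridding_matrix m n M"
    and "unicyclic m n M"
    and "pmm_signs m n M c r"
  shows "\<exists>B::nat. \<forall>L pi vv hh.
           is_coil m n M c r L pi \<and> is_gridding m n M L pi vv hh
           \<longrightarrow> card (misplaced m n M L pi vv hh) \<le> B"
proof -
  define l where "l = card (the_cycle m n M)"
  show ?thesis
  proof (intro exI[of _ "2 * l + (m + n) * l * (4 * l + 1)"] allI impI)
    fix L pi vv hh
    assume H: "is_coil m n M c r L pi \<and> is_gridding m n M L pi vv hh"
    then obtain vo ho where perm: "is_perm L pi" and gc: "is_gridded_coil m n M c r L pi vo ho"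
      unfolding is_coil_def by blast
    from gc obtain sg lab where go: "is_gridding m n M L pi vo ho" and Ll: "l < L"
      and sgb: "bij_betw sg {1..L} {1..L}" and labb: "bij_betw lab {1..l} (the_cycle m n M)"
      and incell: "\<forall>k\<in>{1..L}. in_cell pi vo ho (lab ((k - 1) mod l + 1)) (sg k)"
      and c2: "\<forall>k. 1 < k \<and> k \<le> L \<longrightarrow> orient_arrow m n c r pi vo ho (sg (k - 1)) (sg k)"
      and c3: "\<forall>k. l + 1 < k \<and> k \<le> L \<longrightarrow> orient_arrow m n c r pi vo ho (sg k) (sg (k - l - 1))"
      and c4: "orient_arrow m n c r pi vo ho (sg (l + 1)) (sg 1)"
      unfolding is_gridded_coil_def Let_def l_def by blast
    interpret coilctx m n M c r L pi vo ho vv hh sg lab "the_cycle m n M" l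
      by (unfold_locales) (use assms perm go H Ll sgb labb incell c2 c3 c4 l_def in auto)
    show "card (misplaced m n M L pi vv hh) \<le> 2 * l + (m + n) * l * (4 * l + 1)"
      by (rule misplaced_bound)
  qed
qed


end
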